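(* In the setting described in the context, assume $\mathrm{gap}(U)>0$. Then for every $k\in\mathbb N$, \[ \mathrm{gap}(H^{(k)})\ge \mathrm{gap}(U)-\beta_k . \]
   Context: Let $K\subseteq\mathbb R^d$ be Borel and $\rho:K\to[0,\infty)$ measurable with $0<\int_K\rho\,\mathrm dx<\infty$; $\pi(A)=\int_A\rho\,\mathrm dx/\int_K\rho\,\mathrm dx$. For $t\ge0$, $K(t)=\{x\in K:\rho(x)\ge t\}$, assume $0<\mathrm{vol}_d(K(t))<\infty$ for $t\in(0,\|\rho\|_\infty)$, and $U_t$ is the uniform distribution on $K(t)$. For each $t$, $H_t$ is a Markov kernel on $K(t)$ (extended by $0$ outside $K(t)$, measurable in $(t,x)$), reversible with respect to $U_t$. $L_{2,\pi}=L_2(K,\pi)$, $L_{2,t}=L_2(K(t),U_t)$; $H_t$ acts on $L_{2,t}$ by $H_tf(x)=\int f(y)H_t(x,\mathrm dy)$ and $U_t$ acts by $f\mapsto U_t(f)=\int f\,\mathrm dU_t$. For $k\in\mathbb N$ let $H^{(k)}f(x)=\frac1{\rho(x)}\int_0^{\rho(x)}H_t^kf(x)\,\mathrm dt$ and $Uf(x)=\frac1{\rho(x)}\int_0^{\rho(x)}U_t(f)\,\mathrm dt$ (simple slice sampler). $S(f)=\int_Kf\,\mathrm d\pi$ as an operator onto constants, and for an operator $P$ on $L_{2,\pi}$, $\mathrm{gap}(P)=1-\|P-S\|_{L_{2,\pi}\to L_{2,\pi}}$. Finally $\beta_k=\sup_{x\in K}\big(\int_0^{\rho(x)}\|H_t^k-U_t\|^2_{L_{2,t}\to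 L_{2,t}}\,\mathrm dt/\rho(x)\big)^{1/2}$. *)

theory Defs
  imports "HOL-Probability.Probability"
begin

definition L2fun :: "'a measure \<Rightarrow> ('a \<Rightarrow> real) \<Rightarrow> bool" where
  "L2fun M f \<longleftrightarrow> f \<in> borel_measurable M \<and> (\<integral>\<^sup>+x. ennreal ((f x)\<^sup>2) \<partial>M) < \<infinity>"

definition op_norm_L2 :: "'a measure \<Rightarrow> (('a \<Rightarrow> real) \<Rightarrow> ('a \<Rightarrow> real)) \<Rightarrow> real" where
  "op_norm_L2 M P = Inf {c. 0 \<le> c \<and> (\<forall>f. L2fun M f \<longrightarrow>
      (\<integral>\<^sup>+x. ennreal ((P f x)\<^sup>2) \<partial>M) \<le> ennreal (c\<^sup>2) * (\<integral>\<^sup>+x. ennreal ((f x)\<^sup>2) \<partial>M))}"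

definition level_set :: "'a set \<Rightarrow> ('a \<Rightarrow> real) \<Rightarrow> real \<Rightarrow> 'a set" where
  "level_set K \<rho> t = {x \<in> K. t \<le> \<rho> x}"

definition unif_level :: "'a::euclidean_space set \<Rightarrow> ('a \<Rightarrow> real) \<Rightarrow> real \<Rightarrow> 'a measure" where
  "unif_level K \<rho> t = uniform_measure lborel (level_set K \<rho> t)"

definition target :: "'a::euclidean_space set \<Rightarrow> ('a \<Rightarrow> real) \<Rightarrow> 'a measure" where
  "target K \<rho> = density lborel
     (\<lambda>x. ennreal (indicator K x * \<rho> x / (\<integral>y. indicator K y * \<rho> y \<partial>lborel)))"

definition kernel_op :: "('a \<Rightarrow> 'a measure) \<Rightarrow> ('a \<Rightarrow> real) \<Rightarrow> 'a \<Rightarrow> real" where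
  "kernel_op P f x = (\<integral>y. f y \<partial>(P x))"

definition kernel_pow :: "(real \<Rightarrow> 'a \<Rightarrow> 'a measure) \<Rightarrow> real \<Rightarrow> nat \<Rightarrow> ('a \<Rightarrow> real) \<Rightarrow> 'a \<Rightarrow> real" where
  "kernel_pow H t k = kernel_op (H t) ^^ k"

definition hybrid_op :: "('a \<Rightarrow> real) \<Rightarrow> (real \<Rightarrow> 'a \<Rightarrow> 'a measure) \<Rightarrow> nat \<Rightarrow> ('a \<Rightarrow> real) \<Rightarrow> 'a \<Rightarrow> real" where
  "hybrid_op \<rho> H k f x = (1 / \<rho> x) * set_lebesgue_integral lborel {0..\<rho> x} (\<lambda>t. kernel_pow H t k f x)"

definition slice_op :: "'a::euclidean_space set \<Rightarrow> ('a \<Rightarrow> real) \<Rightarrow> ('a \<Rightarrow> real) \<Rightarrow> 'a \<Rightarrow> real" where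
  "slice_op K \<rho> f x = (1 / \<rho> x) * set_lebesgue_integral lborel {0..\<rho> x} (\<lambda>t. \<integral>y. f y \<partial>(unif_level K \<rho> t))"

definition gap :: "'a measure \<Rightarrow> (('a \<Rightarrow> real) \<Rightarrow> ('a \<Rightarrow> real)) \<Rightarrow> real" where
  "gap M P = 1 - op_norm_L2 M (\<lambda>f x. P f x - (\<integral>y. f y \<partial>M))"

definition beta :: "'a::euclidean_space set \<Rightarrow> ('a \<Rightarrow> real) \<Rightarrow> (real \<Rightarrow> 'a \<Rightarrow> 'a measure) \<Rightarrow> nat \<Rightarrow> real" where
  "beta K \<rho> H k = Sup ((\<lambda>x. sqrt (enn2real (\<integral>\<^sup>+t\<in>{0..\<rho> x}.
       ennreal ((op_norm_L2 (unif_level K \<rho> t)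
          (\<lambda>f y. kernel_pow H t k f y - (\<integral>z. f z \<partial>(unif_level K \<rho> t))))\<^sup>2) \<partial>lborel) / \<rho> x)) ` K)"

end

theory Submission
  imports Defs
begin


lemma kernel_integral_measurable:
  fixes f :: "'a \<Rightarrow> 'b \<Rightarrow> real"
  assumes f: "(\<lambda>(x,y). f x y) \<in> borel_measurable (M \<Otimes>\<^sub>M N)"
    and L: "L \<in> M \<rightarrow>\<^sub>M subprob_algebra N"
  shows "(\<lambda>x. integral\<^sup>L (L x) (f x)) \<in> borel_measurable M"
proof -
  have eq: "integral\<^sup>L (L x) (f x) = (if (\<integral>\<^sup>+ y. ennreal (norm (f x y)) \<partial>L x) < \<infinity>
      then enn2real (\<integral>\<^sup>+ y. ennreal (f x y) \<partial>L x) - enn2real (\<integral>\<^sup>+ y. ennreal (- f x y) \<partial>L x) else 0)"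
    if x: "x \<in> space M" for x
  proof -
    have sx: "sets (L x) = sets N" using sets_kernel[OF L x] .
    have fm0: "(\<lambda>y. f x y) \<in> borel_measurable N"
      using measurable_Pair2[OF f x] by simp
    have fm: "f x \<in> borel_measurable (L x)"
      unfolding measurable_cong_sets[OF sx refl, of borel] using fm0 .
    show ?thesis
    proof (cases "(\<integral>\<^sup>+ y. ennreal (norm (f x y)) \<partial>L x) < \<infinity>")
      case True
      then have i: "integrable (L x) (f x)" using fm by (intro integrableI_bounded) auto
      show ?thesis using True real_lebesgue_integral_def[OF i] by simp
    next
      case False
      then have "\<not> integrable (L x) (f x)" by (simp add: integrable_iff_bounded)
      then show ?thesis using False not_integrable_integral_eq by simp
    qed
  qed
  have f1: "(\<lambda>(x, y). ennreal (norm (f x y))) \<in> borel_measurable (M \<Otimes>\<^sub>M N)"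
    using f by measurable
  have f2: "(\<lambda>(x, y). ennreal (f x y)) \<in> borel_measurable (M \<Otimes>\<^sub>M N)"
    using f by measurable
  have f3: "(\<lambda>(x, y). ennreal (- f x y)) \<in> borel_measurable (M \<Otimes>\<^sub>M N)"
    using f by measurable
  have m1: "(\<lambda>x. \<integral>\<^sup>+ y. ennreal (norm (f x y)) \<partial>L x) \<in> borel_measurable M"
    by (rule nn_integral_measurable_subprob_algebra2[OF f1 L])
  have m2: "(\<lambda>x. \<integral>\<^sup>+ y. ennreal (f x y) \<partial>L x) \<in> borel_measurable M"
    by (rule nn_integral_measurable_subprob_algebra2[OF f2 L])
  have m3: "(\<lambda>x. \<integral>\<^sup>+ y. ennreal (- f x y) \<partial>L x) \<in> borel_measurable M"
    by (rule nn_integral_measurable_subprob_algebra2[OF f3 L])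
  have "(\<lambda>x. (if (\<integral>\<^sup>+ y. ennreal (norm (f x y)) \<partial>L x) < \<infinity>
      then enn2real (\<integral>\<^sup>+ y. ennreal (f x y) \<partial>L x) - enn2real (\<integral>\<^sup>+ y. ennreal (- f x y) \<partial>L x) else 0)) \<in> borel_measurable M"
    using m1 m2 m3 by measurable
  then show ?thesis by (rule measurable_cong[OF eq, THEN iffD2, rotated])
qed

abbreviation Qn :: "'a measure \<Rightarrow> ('a \<Rightarrow> real) \<Rightarrow> ennreal" where
  "Qn M h \<equiv> \<integral>\<^sup>+ x. ennreal ((h x)\<^sup>2) \<partial>M"

lemma abs_integral_le_nn:
  fixes g :: "'a \<Rightarrow> real"
  shows "ennreal \<bar>integral\<^sup>L M g\<bar> \<le> \<integral>\<^sup>+ y. ennreal \<bar>g y\<bar> \<partial>M"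
proof (cases "integrable M g")
  case True
  then show ?thesis using integral_norm_bound_ennreal[OF True] by simp
next
  case False
  then show ?thesis by (simp add: not_integrable_integral_eq)
qed

lemma sq_integral_le_subprob:
  fixes g :: "'a \<Rightarrow> real"
  assumes M: "subprob_space M" and g[measurable]: "g \<in> borel_measurable M"
  shows "ennreal ((integral\<^sup>L M g)\<^sup>2) \<le> Qn M g"
proof -
  have "(ennreal \<bar>integral\<^sup>L M g\<bar>)\<^sup>2 = ennreal (\<bar>integral\<^sup>L M g\<bar>\<^sup>2)"
    by (rule ennreal_power) simp
  then have "ennreal ((integral\<^sup>L M g)\<^sup>2) = (ennreal \<bar>integral\<^sup>L M g\<bar>)\<^sup>2"
    by simp
  also have "\<dots> \<le> (\<integral>\<^sup>+ y. ennreal \<bar>g y\<bar> \<partial>M)\<^sup>2"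
    by (intro power_mono abs_integral_le_nn) auto
  also have "\<dots> = (\<integral>\<^sup>+ y. ennreal \<bar>g y\<bar> * 1 \<partial>M)\<^sup>2" by simp
  also have "\<dots> \<le> (\<integral>\<^sup>+ y. (ennreal \<bar>g y\<bar>)^2 \<partial>M) * (\<integral>\<^sup>+ y. 1 ^ 2 \<partial>M)"
    by (rule Cauchy_Schwarz_nn_integral) auto
  also have "(\<integral>\<^sup>+ y. (ennreal \<bar>g y\<bar>)^2 \<partial>M) = Qn M g"
    by (intro nn_integral_cong) (subst ennreal_power, auto)
  also have "(\<integral>\<^sup>+ y. (1::ennreal) ^ 2 \<partial>M) = emeasure M (space M)"
    by simp
  also have "Qn M g * emeasure M (space M) \<le> Qn M g * 1"
    by (intro mult_left_mono subprob_space.emeasure_space_le_1[OF M]) auto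
  finally show ?thesis by simp
qed

definition onset :: "'a measure \<Rightarrow> (('a \<Rightarrow> real) \<Rightarrow> ('a \<Rightarrow> real)) \<Rightarrow> real set" where
  "onset M P = {c. 0 \<le> c \<and> (\<forall>f. L2fun M f \<longrightarrow> Qn M (P f) \<le> ennreal (c\<^sup>2) * Qn M f)}"

lemma op_norm_onset: "op_norm_L2 M P = Inf (onset M P)"
  unfolding op_norm_L2_def onset_def ..

lemma onsetI: "0 \<le> c \<Longrightarrow> (\<And>f. L2fun M f \<Longrightarrow> Qn M (P f) \<le> ennreal (c\<^sup>2) * Qn M f) \<Longrightarrow> c \<in> onset M P"
  unfolding onset_def by auto

lemma onset_bdd: "bdd_below (onset M P)"
  unfolding onset_def by (intro bdd_belowI[of _ 0]) auto

lemma op_norm_bounds: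
  assumes "c0 \<in> onset M P"
  shows "0 \<le> op_norm_L2 M P" "op_norm_L2 M P \<le> c0"
proof -
  show "0 \<le> op_norm_L2 M P" unfolding op_norm_onset
    using assms by (intro cInf_greatest) (auto simp: onset_def)
  show "op_norm_L2 M P \<le> c0" unfolding op_norm_onset
    using assms onset_bdd by (intro cInf_lower) auto
qed

lemma onset_up:
  assumes "c \<in> onset M P" "c \<le> d" shows "d \<in> onset M P"
proof -
  have "ennreal (c\<^sup>2) \<le> ennreal (d\<^sup>2)"
    using assms by (intro ennreal_leI power_mono) (auto simp: onset_def)
  then have "ennreal (c\<^sup>2) * x \<le> ennreal (d\<^sup>2) * x" for x :: ennreal
    by (rule mult_right_mono) simp
  show ?thesis
  proof (rule onsetI)
    show "0 \<le> d" using assms by (auto simp: onset_def)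
    fix f assume "L2fun M f"
    then have "Qn M (P f) \<le> ennreal (c\<^sup>2) * Qn M f" using assms(1) by (auto simp: onset_def)
    also have "\<dots> \<le> ennreal (d\<^sup>2) * Qn M f" by fact
    finally show "Qn M (P f) \<le> ennreal (d\<^sup>2) * Qn M f" .
  qed
qed

lemma onset_above:
  assumes "c0 \<in> onset M P" "op_norm_L2 M P < c" shows "c \<in> onset M P"
proof -
  obtain c' where "c' \<in> onset M P" "c' < c"
    using assms unfolding op_norm_onset by (subst (asm) cInf_less_iff) (auto intro: onset_bdd)
  then show ?thesis using onset_up by fastforce
qed

lemma op_norm_le:
  assumes "\<And>c. b < c \<Longrightarrow> c \<in> onset M P" "0 \<le> b"
  shows "op_norm_L2 M P \<le> b"
proof (rule field_le_epsilon)
  fix e :: real assume e: "0 < e"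
  have "b + e \<in> onset M P" using assms e by auto
  then show "op_norm_L2 M P \<le> b + e" by (rule op_norm_bounds)
qed


lemma real_le_sq_limit:
  fixes a q n :: real
  assumes A: "\<And>c. n < c \<Longrightarrow> a \<le> c\<^sup>2 * q" and n0: "0 \<le> n" and q0: "0 \<le> q"
  shows "a \<le> n\<^sup>2 * q"
proof (rule field_le_epsilon)
  fix e :: real assume e: "0 < e"
  define B where "B = (2 * n + 1) * q + 1"
  have pos: "1 \<le> B" unfolding B_def using n0 q0 by simp
  define d where "d = min 1 (e / B)"
  have d0: "0 < d" unfolding d_def using e pos by simp
  have d1: "d \<le> 1" unfolding d_def by simp
  have d2: "d * B \<le> e" unfolding d_def using e pos
    by (metis min.cobounded2 le_divide_eq order_less_le_trans zero_less_one order_le_less_trans mult.commute pos_le_divide_eq less_le_trans)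
  have "a \<le> (n + d)\<^sup>2 * q" using d0 by (intro A) simp
  also have "\<dots> = n\<^sup>2 * q + d * ((2 * n + d) * q)" by (simp add: power2_eq_square algebra_simps)
  also have "\<dots> \<le> n\<^sup>2 * q + d * B"
  proof -
    have "(2 * n + d) * q \<le> (2 * n + 1) * q" using d1 q0 by (intro mult_right_mono) auto
    also have "\<dots> \<le> B" unfolding B_def by simp
    finally show ?thesis using d0 by simp
  qed
  finally show "a \<le> n\<^sup>2 * q + e" using d2 by simp
qed
lemma op_norm_bound_apply:
  assumes c0: "c0 \<in> onset M P" and f: "L2fun M f"
  shows "Qn M (P f) \<le> ennreal ((op_norm_L2 M P)\<^sup>2) * Qn M f"
proof -
  let ?n = "op_norm_L2 M P"
  have n0: "0 \<le> ?n" using op_norm_bounds[OF c0] by simp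
  have Qf: "Qn M f < \<infinity>" using f unfolding L2fun_def by simp
  have b: "Qn M (P f) \<le> ennreal (c\<^sup>2) * Qn M f" if "?n < c" for c
    using onset_above[OF c0 that] f unfolding onset_def by auto
  have "Qn M (P f) \<le> ennreal ((?n + 1)\<^sup>2) * Qn M f" using b by simp
  also have "\<dots> < \<infinity>" using Qf by (simp add: ennreal_mult_less_top)
  finally have QP: "Qn M (P f) < \<infinity>" .
  define a where "a = enn2real (Qn M (P f))"
  define q where "q = enn2real (Qn M f)"
  have aeq: "Qn M (P f) = ennreal a" using QP by (simp add: a_def ennreal_enn2real_if)
  have qeq: "Qn M f = ennreal q" using Qf by (simp add: q_def ennreal_enn2real_if)
  have q0: "0 \<le> q" by (simp add: q_def)
  have "a \<le> ?n\<^sup>2 * q"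
  proof (rule real_le_sq_limit[OF _ n0 q0])
    fix c assume "?n < c"
    then have "ennreal a \<le> ennreal (c\<^sup>2) * ennreal q" using b[of c] unfolding aeq qeq by simp
    then have "ennreal a \<le> ennreal (c\<^sup>2 * q)" by (simp add: ennreal_mult q0)
    then show "a \<le> c\<^sup>2 * q" using q0 by (simp add: ennreal_le_iff)
  qed
  then have "ennreal a \<le> ennreal (?n\<^sup>2 * q)" by (rule ennreal_leI)
  then show ?thesis using aeq qeq by (simp add: ennreal_mult q0)
qed




lemma ennreal_div_self_le: "(x::ennreal) / x \<le> 1"
proof (cases x)
  case (real r)
  then show ?thesis by (cases "r = 0") (auto simp: divide_ennreal)
qed (simp add: ennreal_top_divide)

locale slice_setting =
  fixes K :: "'a::euclidean_space set" and \<rho> :: "'a \<Rightarrow> real"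
    and H :: "real \<Rightarrow> 'a \<Rightarrow> 'a measure"
  assumes K_borel: "K \<in> sets lborel"
    and rho_meas: "\<rho> \<in> borel_measurable lborel"
    and rho_nonneg: "\<forall>x\<in>K. 0 \<le> \<rho> x"
    and int_pos: "0 < (\<integral>\<^sup>+x\<in>K. ennreal (\<rho> x) \<partial>lborel)"
    and int_fin: "(\<integral>\<^sup>+x\<in>K. ennreal (\<rho> x) \<partial>lborel) < \<infinity>"
    and level_vol: "\<forall>t. 0 < t \<and> (\<exists>x\<in>K. t < \<rho> x) \<longrightarrow>
        0 < emeasure lborel (level_set K \<rho> t) \<and> emeasure lborel (level_set K \<rho> t) < \<infinity>"
    and H_meas: "(\<lambda>p. H (fst p) (snd p)) \<in> (borel \<Otimes>\<^sub>M lborel) \<rightarrow>\<^sub>M subprob_algebra lborel"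
    and H_markov: "\<forall>t x. x \<in> level_set K \<rho> t \<longrightarrow>
        prob_space (H t x) \<and> emeasure (H t x) (level_set K \<rho> t) = 1"
    and H_zero: "\<forall>t x. x \<notin> level_set K \<rho> t \<longrightarrow> H t x = null_measure lborel"
    and H_rev: "\<forall>t A B. A \<in> sets lborel \<and> B \<in> sets lborel \<longrightarrow>
        (\<integral>\<^sup>+x\<in>A. emeasure (H t x) B \<partial>(unif_level K \<rho> t)) =
        (\<integral>\<^sup>+x\<in>B. emeasure (H t x) A \<partial>(unif_level K \<rho> t))"
begin

lemmas [measurable] = K_borel rho_meas

abbreviation "U t \<equiv> unif_level K \<rho> t"
abbreviation "V t \<equiv> emeasure lborel (level_set K \<rho> t)"

lemma level_meas[measurable]: "level_set K \<rho> t \<in> sets lborel"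
proof -
  have "level_set K \<rho> t = K \<inter> {x \<in> space lborel. t \<le> \<rho> x}" by (auto simp: level_set_def)
  also have "\<dots> \<in> sets lborel" by measurable
  finally show ?thesis .
qed

lemma pairset_meas: "B \<in> sets lborel \<Longrightarrow>
  {p \<in> space (lborel \<Otimes>\<^sub>M lborel). snd p \<in> K \<and> fst p \<le> \<rho> (snd p) \<and> snd p \<in> B} \<in> sets (lborel \<Otimes>\<^sub>M lborel)"
proof -
  assume B: "B \<in> sets lborel"
  have 1: "{p \<in> space (lborel \<Otimes>\<^sub>M lborel). snd p \<in> K \<and> fst p \<le> \<rho> (snd p)} \<in> sets (lborel \<Otimes>\<^sub>M (lborel::'a measure))"
    by measurable
  have 2: "(UNIV :: real set) \<times> B \<in> sets (lborel \<Otimes>\<^sub>M lborel)"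
    using pair_measureI[OF sets.top[of lborel] B] by simp
  have "{p \<in> space (lborel \<Otimes>\<^sub>M lborel). snd p \<in> K \<and> fst p \<le> \<rho> (snd p) \<and> snd p \<in> B} =
    {p \<in> space (lborel \<Otimes>\<^sub>M lborel). snd p \<in> K \<and> fst p \<le> \<rho> (snd p)} \<inter> (UNIV \<times> B)" by auto
  then show ?thesis using 1 2 by auto
qed

lemma sets_U[simp, measurable_cong]: "sets (U t) = sets lborel"
  and space_U[simp]: "space (U t) = UNIV"
  by (simp_all add: unif_level_def)

lemma subprob_U: "subprob_space (U t)"
  by (rule subprob_spaceI) (use emeasure_uniform_measure[OF level_meas, of UNIV] ennreal_div_self_le in \<open>auto simp: unif_level_def\<close>)

lemma U_kernel: "(\<lambda>t. U t) \<in> lborel \<rightarrow>\<^sub>M subprob_algebra lborel"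
proof (rule measurable_subprob_algebra)
  fix B :: "'a set" assume B: "B \<in> sets lborel"
  have eq: "emeasure (U t) B = emeasure lborel (Pair t -` {p \<in> space (lborel \<Otimes>\<^sub>M lborel). snd p \<in> K \<and> fst p \<le> \<rho> (snd p) \<and> snd p \<in> B})
      / emeasure lborel (Pair t -` {p \<in> space (lborel \<Otimes>\<^sub>M lborel). snd p \<in> K \<and> fst p \<le> \<rho> (snd p) \<and> snd p \<in> UNIV})" for t
    using B unfolding unif_level_def
    by (subst emeasure_uniform_measure) (auto simp: level_set_def space_pair_measure intro!: arg_cong2[where f="(/)"] arg_cong[where f="emeasure lborel"])
  show "(\<lambda>t. emeasure (U t) B) \<in> borel_measurable lborel"
    unfolding eq
    by (intro borel_measurable_divide_ennreal lborel.measurable_emeasure_Pair pairset_meas B) simp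
qed (auto simp: subprob_U)

lemma sets_borel_lborel: "sets (borel \<Otimes>\<^sub>M lborel) = sets (lborel \<Otimes>\<^sub>M (lborel :: 'a measure))"
  by (intro sets_pair_measure_cong) simp_all

lemma Hp_kernel: "(\<lambda>p. H (fst p) (snd p)) \<in> (lborel \<Otimes>\<^sub>M lborel) \<rightarrow>\<^sub>M subprob_algebra lborel"
  using H_meas unfolding measurable_cong_sets[OF sets_borel_lborel refl] .

lemma Ht_kernel: "H t \<in> lborel \<rightarrow>\<^sub>M subprob_algebra lborel"
  using measurable_compose[OF measurable_Pair1'[of t lborel lborel] Hp_kernel] by simp

lemma subprob_H: "subprob_space (H t x)"
  using subprob_space_kernel[OF Ht_kernel] by simp

lemma sets_H[simp, measurable_cong]: "sets (H t x) = sets lborel"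
  using sets_kernel[OF Ht_kernel] by simp

lemma kpow_Suc: "kernel_pow H t (Suc j) f x = (\<integral>y. kernel_pow H t j f y \<partial>H t x)"
  by (simp add: kernel_pow_def kernel_op_def)

lemma kpow_0: "kernel_pow H t 0 f = f"
  by (simp add: kernel_pow_def)

lemma kpow_meas:
  assumes f[measurable]: "f \<in> borel_measurable lborel"
  shows "(\<lambda>p. kernel_pow H (fst p) j f (snd p)) \<in> borel_measurable (lborel \<Otimes>\<^sub>M lborel)"
proof (induction j)
  case 0
  then show ?case by (simp add: kpow_0)
next
  case (Suc j)
  have "(\<lambda>(p, y). kernel_pow H (fst p) j f y) \<in> borel_measurable ((lborel \<Otimes>\<^sub>M lborel) \<Otimes>\<^sub>M lborel)"
  proof -
    have "(\<lambda>q. (fst (fst q), snd q)) \<in> (lborel \<Otimes>\<^sub>M lborel) \<Otimes>\<^sub>M lborel \<rightarrow>\<^sub>M lborel \<Otimes>\<^sub>M (lborel :: 'a measure)"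
      by measurable
    from measurable_compose[OF this Suc.IH] show ?thesis by (simp add: split_beta')
  qed
  from kernel_integral_measurable[OF this Hp_kernel] show ?case by (simp add: kpow_Suc)
qed

lemma kpow_meas_t:
  assumes "f \<in> borel_measurable lborel"
  shows "kernel_pow H t j f \<in> borel_measurable lborel"
  using measurable_Pair2[OF kpow_meas[OF assms, of j], of t] by simp

lemma u_meas:
  fixes f :: "'a \<Rightarrow> real"
  assumes f[measurable]: "f \<in> borel_measurable lborel"
  shows "(\<lambda>t. integral\<^sup>L (U t) f) \<in> borel_measurable lborel"
proof -
  show ?thesis
    by (rule kernel_integral_measurable[where f="\<lambda>t y. f y", OF _ U_kernel]) measurable
qed


lemma meas_U: "g \<in> borel_measurable lborel \<Longrightarrow> g \<in> borel_measurable (U t)"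
  by (subst measurable_cong_sets[OF sets_U refl])

lemma Ht_kernel_U: "H t \<in> U s \<rightarrow>\<^sub>M subprob_algebra lborel"
  using Ht_kernel by (simp add: measurable_cong_sets[OF sets_U refl])

lemma space_H[simp]: "space (H t x) = UNIV"
  using sets_eq_imp_space_eq[OF sets_H] by simp

lemma AE_U_level: "AE x in U t. x \<in> level_set K \<rho> t"
  unfolding unif_level_def by (rule AE_uniform_measureI) (use level_meas in auto)

lemma bind_U_H: "U t \<bind> H t = U t"
proof (rule measure_eqI)
  show "sets (U t \<bind> H t) = sets (U t)"
    using sets_bind_measurable[OF Ht_kernel_U] by simp
  fix B assume "B \<in> sets (U t \<bind> H t)"
  then have B: "B \<in> sets lborel" using sets_bind_measurable[OF Ht_kernel_U] by simp
  have "emeasure (U t \<bind> H t) B = (\<integral>\<^sup>+ x. emeasure (H t x) B \<partial>U t)"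
    by (rule emeasure_bind[OF _ Ht_kernel_U]) (use B in auto)
  also have "\<dots> = (\<integral>\<^sup>+ x\<in>UNIV. emeasure (H t x) B \<partial>U t)" by simp
  also have "\<dots> = (\<integral>\<^sup>+ x\<in>B. emeasure (H t x) UNIV \<partial>U t)"
    using H_rev B by auto
  also have "\<dots> = (\<integral>\<^sup>+ x. indicator B x \<partial>U t)"
  proof (rule nn_integral_cong_AE)
    show "AE x in U t. emeasure (H t x) UNIV * indicator B x = indicator B x"
      using AE_U_level
    proof eventually_elim
      case (elim x)
      then have "prob_space (H t x)" using H_markov by auto
      then have "emeasure (H t x) UNIV = 1" using prob_space.emeasure_space_1 by fastforce
      then show ?case by simp
    qed
  qed
  also have "\<dots> = emeasure (U t) B" using B by simp
  finally show "emeasure (U t \<bind> H t) B = emeasure (U t) B" .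
qed

lemma nn_integral_stationary:
  assumes g[measurable]: "g \<in> borel_measurable lborel"
  shows "(\<integral>\<^sup>+ x. (\<integral>\<^sup>+ y. g y \<partial>H t x) \<partial>U t) = integral\<^sup>N (U t) g"
proof -
  have "g \<in> borel_measurable lborel" by simp
  have "integral\<^sup>N (U t \<bind> H t) g = (\<integral>\<^sup>+ x. (\<integral>\<^sup>+ y. g y \<partial>H t x) \<partial>U t)"
    by (rule nn_integral_bind[OF _ Ht_kernel_U]) simp
  then show ?thesis using bind_U_H by simp
qed

lemma kop_contract:
  fixes g :: "'a \<Rightarrow> real"
  assumes g[measurable]: "g \<in> borel_measurable lborel"
  shows "Qn (U t) (kernel_op (H t) g) \<le> Qn (U t) g"
proof -
  have "Qn (U t) (kernel_op (H t) g) \<le> (\<integral>\<^sup>+ x. Qn (H t x) g \<partial>U t)"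
  proof (rule nn_integral_mono)
    fix x
    have "g \<in> borel_measurable (H t x)" by simp
    from sq_integral_le_subprob[OF subprob_H this]
    show "ennreal ((kernel_op (H t) g x)\<^sup>2) \<le> Qn (H t x) g" by (simp add: kernel_op_def)
  qed
  also have "\<dots> = Qn (U t) g"
    by (rule nn_integral_stationary) measurable
  finally show ?thesis .
qed

lemma kpow_contract:
  fixes g :: "'a \<Rightarrow> real"
  assumes g[measurable]: "g \<in> borel_measurable lborel"
  shows "Qn (U t) (kernel_pow H t j g) \<le> Qn (U t) g"
proof (induction j)
  case 0
  then show ?case by (simp add: kpow_0)
next
  case (Suc j)
  have eq: "kernel_pow H t (Suc j) g = kernel_op (H t) (kernel_pow H t j g)"
    by (simp add: kernel_pow_def)
  have "Qn (U t) (kernel_pow H t (Suc j) g) \<le> Qn (U t) (kernel_pow H t j g)"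
    unfolding eq by (rule kop_contract[OF kpow_meas_t[OF g]])
  then show ?case using Suc.IH by (rule order_trans)
qed

lemma Qn_diff_le:
  fixes a :: "'b \<Rightarrow> real"
  assumes [measurable]: "a \<in> borel_measurable M" "b \<in> borel_measurable M"
  shows "Qn M (\<lambda>y. a y - b y) \<le> 2 * Qn M a + 2 * Qn M b"
proof -
  have "Qn M (\<lambda>y. a y - b y) \<le> (\<integral>\<^sup>+ y. 2 * ennreal ((a y)\<^sup>2) + 2 * ennreal ((b y)\<^sup>2) \<partial>M)"
  proof (rule nn_integral_mono)
    fix y
    have "(a y - b y)\<^sup>2 \<le> 2 * (a y)\<^sup>2 + 2 * (b y)\<^sup>2"
      by (smt (verit) sum_squares_ge_zero power2_diff power2_sum zero_le_power2)
    then have "ennreal ((a y - b y)\<^sup>2) \<le> ennreal (2 * (a y)\<^sup>2 + 2 * (b y)\<^sup>2)" by (rule ennreal_leI)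
    also have "\<dots> = 2 * ennreal ((a y)\<^sup>2) + 2 * ennreal ((b y)\<^sup>2)"
      by (simp add: ennreal_plus ennreal_mult)
    finally show "ennreal ((a y - b y)\<^sup>2) \<le> 2 * ennreal ((a y)\<^sup>2) + 2 * ennreal ((b y)\<^sup>2)" .
  qed
  also have "\<dots> = 2 * Qn M a + 2 * Qn M b"
    by (simp add: nn_integral_add nn_integral_cmult)
  finally show ?thesis .
qed

lemma Qn_const_le:
  assumes "subprob_space M"
  shows "Qn M (\<lambda>y. c) \<le> ennreal (c\<^sup>2)"
proof -
  have "Qn M (\<lambda>y. c) = ennreal (c\<^sup>2) * emeasure M (space M)" by simp
  also have "\<dots> \<le> ennreal (c\<^sup>2) * 1"
    by (intro mult_left_mono subprob_space.emeasure_space_le_1[OF assms]) auto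
  finally show ?thesis by simp
qed

definition Pk :: "nat \<Rightarrow> real \<Rightarrow> ('a \<Rightarrow> real) \<Rightarrow> 'a \<Rightarrow> real" where
  "Pk k t = (\<lambda>f y. kernel_pow H t k f y - (\<integral>z. f z \<partial>U t))"

lemma two_in_onset_Pk: "2 \<in> onset (U t) (Pk k t)"
proof (rule onsetI)
  fix f assume f: "L2fun (U t) f"
  then have "f \<in> borel_measurable (U t)" by (simp add: L2fun_def)
  then have fm[measurable]: "f \<in> borel_measurable lborel"
    by (subst (asm) measurable_cong_sets[OF sets_U refl])
  have "Qn (U t) (Pk k t f) \<le> 2 * Qn (U t) (kernel_pow H t k f) + 2 * Qn (U t) (\<lambda>y. \<integral>z. f z \<partial>U t)"
    unfolding Pk_def by (rule Qn_diff_le) (auto intro!: meas_U kpow_meas_t)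
  also have "\<dots> \<le> 2 * Qn (U t) f + 2 * Qn (U t) f"
  proof (intro add_mono mult_left_mono)
    show "Qn (U t) (kernel_pow H t k f) \<le> Qn (U t) f" by (rule kpow_contract[OF fm])
    have "Qn (U t) (\<lambda>y. \<integral>z. f z \<partial>U t) \<le> ennreal ((\<integral>z. f z \<partial>U t)\<^sup>2)"
      by (rule Qn_const_le[OF subprob_U])
    also have "\<dots> \<le> Qn (U t) f" by (rule sq_integral_le_subprob[OF subprob_U]) simp
    finally show "Qn (U t) (\<lambda>y. \<integral>z. f z \<partial>U t) \<le> Qn (U t) f" .
  qed auto
  also have "\<dots> = ennreal (2\<^sup>2) * Qn (U t) f"
    unfolding distrib_right[symmetric] by simp
  finally show "Qn (U t) (Pk k t f) \<le> ennreal (2\<^sup>2) * Qn (U t) f" .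
qed simp

end



context slice_setting begin

lemma V_fin: assumes t: "0 < t" shows "V t < \<infinity>"
proof -
  have "ennreal t * V t = (\<integral>\<^sup>+ x. ennreal t * indicator (level_set K \<rho> t) x \<partial>lborel)"
    by (rule nn_integral_cmult_indicator[symmetric, OF level_meas])
  also have "\<dots> \<le> (\<integral>\<^sup>+x\<in>K. ennreal (\<rho> x) \<partial>lborel)"
    by (intro nn_integral_mono) (auto simp: level_set_def indicator_def intro: ennreal_leI)
  also have "\<dots> < \<infinity>" by (rule int_fin)
  finally have "V t = 0 \<or> V t < \<infinity>" using t by (simp add: ennreal_mult_less_top top.not_eq_extremum)
  then show ?thesis by auto
qed

lemma layer_cake:
  fixes G :: "real \<Rightarrow> 'a \<Rightarrow> ennreal"
  assumes G[measurable]: "(\<lambda>(t,x). G t x) \<in> borel_measurable (lborel \<Otimes>\<^sub>M lborel)"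
  shows "(\<integral>\<^sup>+ x\<in>K. (\<integral>\<^sup>+ t\<in>{0..\<rho> x}. G t x \<partial>lborel) \<partial>lborel)
       = (\<integral>\<^sup>+ t\<in>{0<..}. V t * integral\<^sup>N (U t) (G t) \<partial>lborel)"
proof -
  define F where "F t x = (if x \<in> K \<and> 0 \<le> t \<and> t \<le> \<rho> x then G t x else 0)" for t x
  have Fm: "(\<lambda>(t,x). F t x) \<in> borel_measurable (lborel \<Otimes>\<^sub>M lborel)"
  proof -
    have "(\<lambda>p. if snd p \<in> K \<and> 0 \<le> fst p \<and> fst p \<le> \<rho> (snd p) then G (fst p) (snd p) else 0)
       \<in> borel_measurable (lborel \<Otimes>\<^sub>M (lborel :: 'a measure))"
      using G by (simp add: split_beta') measurable
    then show ?thesis by (simp add: F_def split_beta')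
  qed
  have Gt[measurable]: "G t \<in> borel_measurable lborel" for t
    using measurable_Pair2[OF G, of t] by simp
  have "(\<integral>\<^sup>+ x\<in>K. (\<integral>\<^sup>+ t\<in>{0..\<rho> x}. G t x \<partial>lborel) \<partial>lborel) = (\<integral>\<^sup>+ x. (\<integral>\<^sup>+ t. F t x \<partial>lborel) \<partial>lborel)"
  proof (rule nn_integral_cong)
    fix x
    show "(\<integral>\<^sup>+ t\<in>{0..\<rho> x}. G t x \<partial>lborel) * indicator K x = (\<integral>\<^sup>+ t. F t x \<partial>lborel)"
    proof (cases "x \<in> K")
      case True
      then show ?thesis by (auto simp: F_def intro!: nn_integral_cong split: split_indicator)
    next
      case False
      then show ?thesis by (simp add: F_def)
    qed
  qed
  also have "\<dots> = (\<integral>\<^sup>+ t. (\<integral>\<^sup>+ x. F t x \<partial>lborel) \<partial>lborel)"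
    by (rule lborel_pair.Fubini'[OF Fm])
  also have "\<dots> = (\<integral>\<^sup>+ t\<in>{0<..}. V t * integral\<^sup>N (U t) (G t) \<partial>lborel)"
  proof (rule nn_integral_cong_AE)
    show "AE t in lborel. (\<integral>\<^sup>+ x. F t x \<partial>lborel) = V t * integral\<^sup>N (U t) (G t) * indicator {0<..} t"
      using AE_lborel_singleton[of 0]
    proof eventually_elim
      case (elim t)
      show ?case
      proof (cases "t < 0")
        case True
        then show ?thesis by (simp add: F_def)
      next
        case False
        with elim have t: "0 < t" by simp
        have FA: "F t x = G t x * indicator (level_set K \<rho> t) x" for x
          using t by (auto simp: F_def level_set_def)
        have UG: "integral\<^sup>N (U t) (G t) = (\<integral>\<^sup>+ x. G t x * indicator (level_set K \<rho> t) x \<partial>lborel) / V t"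
          unfolding unif_level_def by (rule nn_integral_uniform_measure) (use level_meas in simp_all)
        show ?thesis
        proof (cases "V t = 0")
          case True
          have "level_set K \<rho> t \<in> null_sets lborel" using True level_meas by (intro null_setsI) auto
          from nn_integral_null_set[OF this, of "G t"] show ?thesis using True t by (simp add: FA)
        next
          case False
          have "V t \<noteq> \<infinity>" using V_fin[OF t] by simp
          then show ?thesis using t False
            by (simp add: FA UG ennreal_times_divide mult.commute[of "V t"] mult_divide_eq_ennreal)
        qed
      qed
    qed
  qed
  finally show ?thesis .
qed

end



context slice_setting begin

lemma ind_rho_eq: "indicator {0..\<rho> x} t = (if 0 \<le> t \<and> t \<le> \<rho> x then 1 else 0)"
  by (simp add: indicator_def)

lemma ind_meas1[measurable]: "(\<lambda>p. indicator {0..\<rho> (fst p)} (snd p) :: ennreal) \<in> borel_measurable (lborel \<Otimes>\<^sub>M lborel)"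
  unfolding ind_rho_eq by measurable

lemma ind_meas2[measurable]: "(\<lambda>p. indicator {0..\<rho> (snd p)} (fst p) :: ennreal) \<in> borel_measurable (lborel \<Otimes>\<^sub>M lborel)"
  unfolding ind_rho_eq by measurable

lemma test_meas:
  fixes G :: "real \<Rightarrow> 'a \<Rightarrow> real"
  assumes G[measurable]: "(\<lambda>(t,x). G t x) \<in> borel_measurable (lborel \<Otimes>\<^sub>M lborel)"
   and w[measurable]: "w \<in> borel_measurable lborel"
  shows "(\<lambda>x. \<integral>\<^sup>+ t\<in>{0..\<rho> x}. ennreal ((G t x)\<^sup>2 / (w t)\<^sup>2) \<partial>lborel) \<in> borel_measurable lborel"
proof -
  have "(\<lambda>(x,t). ennreal ((G t x)\<^sup>2 / (w t)\<^sup>2) * indicator {0..\<rho> x} t) \<in> borel_measurable (lborel \<Otimes>\<^sub>M lborel)"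
    by (simp add: split_beta') measurable
  from lborel.borel_measurable_nn_integral[OF this] show ?thesis by simp
qed


lemma weighted_bound:
  fixes G :: "real \<Rightarrow> 'a \<Rightarrow> real" and w :: "real \<Rightarrow> real" and f :: "'a \<Rightarrow> real" and C :: real
  assumes G[measurable]: "(\<lambda>(t,x). G t x) \<in> borel_measurable (lborel \<Otimes>\<^sub>M lborel)"
    and w[measurable]: "w \<in> borel_measurable lborel" and wpos: "\<And>t. 0 < w t"
    and f[measurable]: "f \<in> borel_measurable lborel"
    and i: "\<And>t. 0 < t \<Longrightarrow> Qn (U t) (G t) \<le> ennreal ((w t)\<^sup>2) * Qn (U t) f"
    and ii: "\<And>x. x \<in> K \<Longrightarrow> 0 < \<rho> x \<Longrightarrow> (\<integral>\<^sup>+ t\<in>{0..\<rho> x}. ennreal ((w t)\<^sup>2) \<partial>lborel) \<le> ennreal (C\<^sup>2 * \<rho> x)"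
  shows "(\<integral>\<^sup>+ x\<in>K. (\<integral>\<^sup>+ t\<in>{0..\<rho> x}. ennreal \<bar>G t x\<bar> \<partial>lborel)\<^sup>2 / ennreal (\<rho> x) \<partial>lborel)
     \<le> ennreal (C\<^sup>2) * (\<integral>\<^sup>+ x\<in>K. ennreal (\<rho> x * (f x)\<^sup>2) \<partial>lborel)"
proof -
  define A where "A x = (\<integral>\<^sup>+ t\<in>{0..\<rho> x}. ennreal \<bar>G t x\<bar> \<partial>lborel)" for x
  define B where "B x = (\<integral>\<^sup>+ t\<in>{0..\<rho> x}. ennreal ((G t x)\<^sup>2 / (w t)\<^sup>2) \<partial>lborel)" for x
  have Bm[measurable]: "B \<in> borel_measurable lborel"
  proof -
    have "(\<lambda>(x,t). ennreal ((G t x)\<^sup>2 / (w t)\<^sup>2) * indicator {0..\<rho> x} t) \<in> borel_measurable (lborel \<Otimes>\<^sub>M lborel)"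
      by (simp add: split_beta') measurable
    from lborel.borel_measurable_nn_integral[OF this] show ?thesis unfolding B_def[abs_def] by simp
  qed
  have step1: "A x ^ 2 / ennreal (\<rho> x) \<le> ennreal (C\<^sup>2) * B x" if x: "x \<in> K" for x
  proof (cases "\<rho> x = 0")
    case True
    have "A x = (\<integral>\<^sup>+ t. ennreal \<bar>G t x\<bar> * indicator {0} t \<partial>lborel)"
      by (simp add: A_def True)
    also have "\<dots> = 0" by simp
    finally show ?thesis by simp
  next
    case False
    then have rpos: "0 < \<rho> x" using rho_nonneg x by force
    define I where "I = {0..\<rho> x}"
    have "A x = (\<integral>\<^sup>+ t. (ennreal (w t) * indicator I t) * (ennreal (\<bar>G t x\<bar> / w t) * indicator I t) \<partial>lborel)"
      unfolding A_def I_def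
    proof (rule nn_integral_cong)
      fix t
      have "ennreal (w t) * ennreal (\<bar>G t x\<bar> / w t) = ennreal \<bar>G t x\<bar>"
        using wpos[of t] by (simp add: ennreal_mult[symmetric])
      then show "ennreal \<bar>G t x\<bar> * indicator {0..\<rho> x} t =
          ennreal (w t) * indicator {0..\<rho> x} t * (ennreal (\<bar>G t x\<bar> / w t) * indicator {0..\<rho> x} t)"
        by (auto split: split_indicator)
    qed
    then have "(A x)\<^sup>2 \<le> (\<integral>\<^sup>+ t. (ennreal (w t) * indicator I t)^2 \<partial>lborel) * (\<integral>\<^sup>+ t. (ennreal (\<bar>G t x\<bar> / w t) * indicator I t)^2 \<partial>lborel)"
      by (simp only:) (rule Cauchy_Schwarz_nn_integral; simp add: I_def)
    also have "(\<integral>\<^sup>+ t. (ennreal (w t) * indicator I t)^2 \<partial>lborel) = (\<integral>\<^sup>+ t\<in>{0..\<rho> x}. ennreal ((w t)\<^sup>2) \<partial>lborel)"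
      unfolding I_def
      by (intro nn_integral_cong) (auto split: split_indicator simp: power_mult_distrib ennreal_power[OF less_imp_le[OF wpos]])
    also have "(\<integral>\<^sup>+ t. (ennreal (\<bar>G t x\<bar> / w t) * indicator I t)^2 \<partial>lborel) = B x"
      unfolding I_def B_def
    proof (intro nn_integral_cong)
      fix t
      have "(ennreal (\<bar>G t x\<bar> / w t))\<^sup>2 = ennreal ((\<bar>G t x\<bar> / w t)\<^sup>2)"
        using wpos[of t] by (intro ennreal_power) simp
      also have "(\<bar>G t x\<bar> / w t)\<^sup>2 = (G t x)\<^sup>2 / (w t)\<^sup>2" by (simp add: power_divide)
      finally show "(ennreal (\<bar>G t x\<bar> / w t) * indicator {0..\<rho> x} t)\<^sup>2 =
          ennreal ((G t x)\<^sup>2 / (w t)\<^sup>2) * indicator {0..\<rho> x} t"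
        by (auto split: split_indicator simp: power_mult_distrib)
    qed
    also have "(\<integral>\<^sup>+ t\<in>{0..\<rho> x}. ennreal ((w t)\<^sup>2) \<partial>lborel) * B x \<le> ennreal (C\<^sup>2 * \<rho> x) * B x"
      by (intro mult_right_mono ii x rpos) simp
    also have "ennreal (C\<^sup>2 * \<rho> x) * B x = ennreal (\<rho> x) * (ennreal (C\<^sup>2) * B x)"
      using rpos by (simp add: ennreal_mult mult_ac)
    finally have "(A x)\<^sup>2 \<le> ennreal (\<rho> x) * (ennreal (C\<^sup>2) * B x)" .
    then show ?thesis using rpos by (intro divide_le_posI_ennreal) simp_all
  qed
  have "(\<integral>\<^sup>+ x\<in>K. (A x)\<^sup>2 / ennreal (\<rho> x) \<partial>lborel) \<le> (\<integral>\<^sup>+ x\<in>K. ennreal (C\<^sup>2) * B x \<partial>lborel)"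
    by (intro nn_integral_mono) (auto split: split_indicator intro: step1)
  also have "\<dots> = ennreal (C\<^sup>2) * (\<integral>\<^sup>+ x\<in>K. B x \<partial>lborel)"
    by (subst nn_integral_cmult[symmetric]) (auto simp: mult_ac)
  also have "(\<integral>\<^sup>+ x\<in>K. B x \<partial>lborel) = (\<integral>\<^sup>+ t\<in>{0<..}. V t * integral\<^sup>N (U t) (\<lambda>x. ennreal ((G t x)\<^sup>2 / (w t)\<^sup>2)) \<partial>lborel)"
    unfolding B_def by (rule layer_cake) measurable
  also have "\<dots> \<le> (\<integral>\<^sup>+ t\<in>{0<..}. V t * Qn (U t) f \<partial>lborel)"
  proof (intro nn_integral_mono)
    fix t
    show "V t * integral\<^sup>N (U t) (\<lambda>x. ennreal ((G t x)\<^sup>2 / (w t)\<^sup>2)) * indicator {0<..} t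
        \<le> V t * Qn (U t) f * indicator {0<..} t"
    proof (cases "0 < t")
      case True
      have wp: "0 < (w t)\<^sup>2" using wpos[of t] by simp
      have Gm: "G t \<in> borel_measurable lborel" using measurable_Pair2[OF G, of t] by simp
      have "integral\<^sup>N (U t) (\<lambda>x. ennreal ((G t x)\<^sup>2 / (w t)\<^sup>2)) = integral\<^sup>N (U t) (\<lambda>x. ennreal ((G t x)\<^sup>2) / ennreal ((w t)\<^sup>2))"
        using wp by (intro nn_integral_cong) (simp add: divide_ennreal)
      also have "\<dots> = Qn (U t) (G t) / ennreal ((w t)\<^sup>2)"
        by (rule nn_integral_divide) (use Gm in \<open>simp add: meas_U\<close>)
      also have "\<dots> \<le> Qn (U t) f"
        using wp i[OF True] by (intro divide_le_posI_ennreal) simp_all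
      finally show ?thesis by (intro mult_right_mono mult_left_mono) auto
    qed simp
  qed
  also have "\<dots> = (\<integral>\<^sup>+ x\<in>K. (\<integral>\<^sup>+ t\<in>{0..\<rho> x}. ennreal ((f x)\<^sup>2) \<partial>lborel) \<partial>lborel)"
    by (rule layer_cake[symmetric]) measurable
  also have "\<dots> = (\<integral>\<^sup>+ x\<in>K. ennreal (\<rho> x * (f x)\<^sup>2) \<partial>lborel)"
  proof (intro nn_integral_cong)
    fix x
    show "(\<integral>\<^sup>+ t\<in>{0..\<rho> x}. ennreal ((f x)\<^sup>2) \<partial>lborel) * indicator K x = ennreal (\<rho> x * (f x)\<^sup>2) * indicator K x"
    proof (cases "x \<in> K")
      case True
      then have r0: "0 \<le> \<rho> x" using rho_nonneg by auto
      have "(\<integral>\<^sup>+ t\<in>{0..\<rho> x}. ennreal ((f x)\<^sup>2) \<partial>lborel) = ennreal ((f x)\<^sup>2) * emeasure lborel {0..\<rho> x}"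
        by (rule nn_integral_cmult_indicator) simp
      also have "\<dots> = ennreal (\<rho> x * (f x)\<^sup>2)" using r0 by (simp add: ennreal_mult mult.commute)
      finally show ?thesis by simp
    qed simp
  qed
  finally show ?thesis unfolding A_def by (simp add: mult_left_mono)
qed

end



context slice_setting begin

definition "Z = (\<integral>y. indicator K y * \<rho> y \<partial>lborel)"
definition "J h = (\<integral>\<^sup>+x\<in>K. ennreal (\<rho> x * (h x)\<^sup>2) \<partial>lborel)"

lemma Z_facts: "ennreal Z = (\<integral>\<^sup>+x\<in>K. ennreal (\<rho> x) \<partial>lborel)" "0 < Z"
proof -
  have eq: "(\<integral>\<^sup>+ y. ennreal (indicator K y * \<rho> y) \<partial>lborel) = (\<integral>\<^sup>+x\<in>K. ennreal (\<rho> x) \<partial>lborel)"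
    by (intro nn_integral_cong) (auto split: split_indicator)
  have eq2: "(\<integral>\<^sup>+ y. ennreal (norm (indicator K y * \<rho> y)) \<partial>lborel) = (\<integral>\<^sup>+x\<in>K. ennreal (\<rho> x) \<partial>lborel)"
    using rho_nonneg by (intro nn_integral_cong) (auto split: split_indicator)
  have int: "integrable lborel (\<lambda>y. indicator K y * \<rho> y)"
    using int_fin eq2 by (intro integrableI_bounded) auto
  have "(\<integral>\<^sup>+ y. ennreal (indicator K y * \<rho> y) \<partial>lborel) = ennreal Z"
    unfolding Z_def using rho_nonneg
    by (intro nn_integral_eq_integral[OF int]) (auto split: split_indicator)
  then show ez: "ennreal Z = (\<integral>\<^sup>+x\<in>K. ennreal (\<rho> x) \<partial>lborel)" using eq by simp
  show "0 < Z" using int_pos unfolding ez[symmetric] by (simp add: ennreal_less_zero_iff)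
qed

lemma sets_target[simp, measurable_cong]: "sets (target K \<rho>) = sets lborel"
  and space_target[simp]: "space (target K \<rho>) = UNIV"
  by (simp_all add: target_def)

lemma target_density_eq:
  "ennreal (indicator K x * \<rho> x / Z) * ennreal ((h x)\<^sup>2) = ennreal (\<rho> x * (h x)\<^sup>2) * indicator K x / ennreal Z"
proof (cases "x \<in> K")
  case True
  then have r: "0 \<le> \<rho> x" using rho_nonneg by auto
  have "ennreal (\<rho> x / Z) * ennreal ((h x)\<^sup>2) = ennreal (\<rho> x / Z * (h x)\<^sup>2)"
    using r Z_facts(2) by (intro ennreal_mult[symmetric]) auto
  also have "\<rho> x / Z * (h x)\<^sup>2 = (\<rho> x * (h x)\<^sup>2) / Z" by simp
  also have "ennreal \<dots> = ennreal (\<rho> x * (h x)\<^sup>2) / ennreal Z"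
    using r Z_facts(2) by (simp add: divide_ennreal)
  finally show ?thesis using True by simp
qed simp

lemma Qn_target:
  assumes h[measurable]: "h \<in> borel_measurable lborel"
  shows "Qn (target K \<rho>) h = J h / ennreal Z"
proof -
  have "Qn (target K \<rho>) h = (\<integral>\<^sup>+ x. ennreal (indicator K x * \<rho> x / Z) * ennreal ((h x)\<^sup>2) \<partial>lborel)"
    unfolding target_def Z_def[symmetric] by (rule nn_integral_density) measurable
  also have "\<dots> = (\<integral>\<^sup>+ x. ennreal (\<rho> x * (h x)\<^sup>2) * indicator K x / ennreal Z \<partial>lborel)"
    by (simp add: target_density_eq)
  also have "\<dots> = J h / ennreal Z"
    unfolding J_def by (rule nn_integral_divide) measurable
  finally show ?thesis .
qed

lemma prob_target: "prob_space (target K \<rho>)"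
proof (rule prob_spaceI)
  have "emeasure (target K \<rho>) (space (target K \<rho>)) = (\<integral>\<^sup>+ x. ennreal (indicator K x * \<rho> x / Z) \<partial>lborel)"
  proof -
    have dm: "(\<lambda>x. ennreal (indicator K x * \<rho> x / Z)) \<in> borel_measurable lborel" by measurable
    show ?thesis unfolding target_def Z_def[symmetric] using emeasure_density[OF dm, of UNIV] by simp
  qed
  also have "\<dots> = (\<integral>\<^sup>+ x. ennreal (indicator K x * \<rho> x / Z) * ennreal ((1::real)\<^sup>2) \<partial>lborel)" by simp
  also have "\<dots> = (\<integral>\<^sup>+ x. ennreal (\<rho> x * 1\<^sup>2) * indicator K x / ennreal Z \<partial>lborel)"
    by (intro nn_integral_cong) (use target_density_eq[where h="\<lambda>_. 1"] in simp)
  also have "\<dots> = (\<integral>\<^sup>+x\<in>K. ennreal (\<rho> x) \<partial>lborel) / ennreal Z"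
    by (subst nn_integral_divide) measurable
  also have "\<dots> = 1" unfolding Z_facts(1)[symmetric] using Z_facts(2)
    by (simp add: divide_ennreal)
  finally show "emeasure (target K \<rho>) (space (target K \<rho>)) = 1" .
qed

lemma kpow_meas_swap:
  assumes "f \<in> borel_measurable lborel"
  shows "(\<lambda>p. kernel_pow H (snd p) k f (fst p)) \<in> borel_measurable (lborel \<Otimes>\<^sub>M lborel)"
proof -
  have "(\<lambda>p. (snd p, fst p)) \<in> (lborel \<Otimes>\<^sub>M (lborel::real measure)) \<rightarrow>\<^sub>M (lborel \<Otimes>\<^sub>M (lborel :: 'a measure))"
    by measurable
  from measurable_compose[OF this kpow_meas[OF assms]] show ?thesis by simp
qed

lemma ind_real_meas: "(\<lambda>p. indicator {0..\<rho> (fst p)} (snd p) :: real) \<in> borel_measurable (lborel \<Otimes>\<^sub>M lborel)"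
  unfolding ind_rho_eq by measurable

lemma hyb_meas:
  assumes f[measurable]: "f \<in> borel_measurable lborel"
  shows "hybrid_op \<rho> H k f \<in> borel_measurable lborel"
proof -
  note [measurable] = kpow_meas_swap[OF f]
  have "(\<lambda>(x, t). indicator {0..\<rho> x} t *\<^sub>R kernel_pow H t k f x) \<in> borel_measurable (lborel \<Otimes>\<^sub>M lborel)"
    unfolding split_beta' by (intro borel_measurable_scaleR ind_real_meas kpow_meas_swap[OF f])
  from lborel.borel_measurable_lebesgue_integral[OF this]
  have "(\<lambda>x. set_lebesgue_integral lborel {0..\<rho> x} (\<lambda>t. kernel_pow H t k f x)) \<in> borel_measurable lborel"
    by (simp add: set_lebesgue_integral_def)
  then show ?thesis unfolding hybrid_op_def[abs_def] by measurable
qed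

lemma slice_meas:
  assumes f[measurable]: "f \<in> borel_measurable lborel"
  shows "slice_op K \<rho> f \<in> borel_measurable lborel"
proof -
  note [measurable] = u_meas[OF f]
  have um: "(\<lambda>p. \<integral>y. f y \<partial>U (snd p)) \<in> borel_measurable (lborel \<Otimes>\<^sub>M (lborel::real measure))"
    using measurable_compose[OF measurable_snd u_meas[OF f]] by simp
  have "(\<lambda>(x, t). indicator {0..\<rho> x} t *\<^sub>R (\<integral>y. f y \<partial>U t)) \<in> borel_measurable (lborel \<Otimes>\<^sub>M lborel)"
    unfolding split_beta' by (intro borel_measurable_scaleR ind_real_meas um)
  from lborel.borel_measurable_lebesgue_integral[OF this]
  have "(\<lambda>x. set_lebesgue_integral lborel {0..\<rho> x} (\<lambda>t. \<integral>y. f y \<partial>U t)) \<in> borel_measurable lborel"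
    by (simp add: set_lebesgue_integral_def)
  then show ?thesis unfolding slice_op_def[abs_def] by measurable
qed

end



lemma ennreal_sq_div:
  fixes r s :: real
  assumes r: "0 < r" and A: "ennreal \<bar>s\<bar> \<le> A"
  shows "ennreal (r * (s / r)\<^sup>2) \<le> A\<^sup>2 / ennreal r"
proof -
  have "r * (s / r)\<^sup>2 = s\<^sup>2 / r" using r by (simp add: power2_eq_square)
  then have "ennreal (r * (s / r)\<^sup>2) = ennreal (\<bar>s\<bar>\<^sup>2) / ennreal r"
    using r by (simp add: divide_ennreal)
  also have "ennreal (\<bar>s\<bar>\<^sup>2) = (ennreal \<bar>s\<bar>)\<^sup>2" by (rule ennreal_power[symmetric]) simp
  also have "(ennreal \<bar>s\<bar>)\<^sup>2 / ennreal r \<le> A\<^sup>2 / ennreal r"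
    by (intro divide_right_mono_ennreal power_mono A) simp
  finally show ?thesis .
qed

context slice_setting begin

lemma emeasure_Icc_rho: "0 \<le> \<rho> x \<Longrightarrow> (\<integral>\<^sup>+ t\<in>{0..\<rho> x}. ennreal c \<partial>lborel) = ennreal (c * \<rho> x)" if "0 \<le> c"
proof -
  assume r: "0 \<le> \<rho> x"
  have "(\<integral>\<^sup>+ t\<in>{0..\<rho> x}. ennreal c \<partial>lborel) = ennreal c * emeasure lborel {0..\<rho> x}"
    by (rule nn_integral_cmult_indicator) simp
  then show ?thesis using r that by (simp add: ennreal_mult)
qed

lemma slice_part:
  fixes f :: "'a \<Rightarrow> real"
  assumes f[measurable]: "f \<in> borel_measurable lborel"
  shows "(\<integral>\<^sup>+x\<in>K. (\<integral>\<^sup>+t\<in>{0..\<rho> x}. ennreal \<bar>\<integral>y. f y \<partial>U t\<bar> \<partial>lborel)\<^sup>2 / ennreal (\<rho> x) \<partial>lborel) \<le> J f"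
proof -
  have um: "(\<lambda>(t, x::'a). \<integral>y. f y \<partial>U t) \<in> borel_measurable (lborel \<Otimes>\<^sub>M lborel)"
    apply (subst measurable_split_conv)
    apply (rule measurable_compose[OF measurable_fst])
    apply (rule u_meas[OF f])
    done
  have "(\<integral>\<^sup>+x\<in>K. (\<integral>\<^sup>+t\<in>{0..\<rho> x}. ennreal \<bar>\<integral>y. f y \<partial>U t\<bar> \<partial>lborel)\<^sup>2 / ennreal (\<rho> x) \<partial>lborel)
      \<le> ennreal (1\<^sup>2) * J f"
    unfolding J_def
  proof (rule weighted_bound[where G="\<lambda>t x. \<integral>y. f y \<partial>U t" and w="\<lambda>_. 1"])
    show "(\<lambda>(t, x::'a). \<integral>y. f y \<partial>U t) \<in> borel_measurable (lborel \<Otimes>\<^sub>M lborel)" by (rule um)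
    fix t :: real
    have "Qn (U t) (\<lambda>x. \<integral>y. f y \<partial>U t) \<le> ennreal ((\<integral>y. f y \<partial>U t)\<^sup>2)"
      by (rule Qn_const_le[OF subprob_U])
    also have "\<dots> \<le> Qn (U t) f" by (rule sq_integral_le_subprob[OF subprob_U]) simp
    finally show "Qn (U t) (\<lambda>x. \<integral>y. f y \<partial>U t) \<le> ennreal ((1::real)\<^sup>2) * Qn (U t) f" by simp
  next
    fix x assume "x \<in> K" "0 < \<rho> x"
    then show "(\<integral>\<^sup>+ t\<in>{0..\<rho> x}. ennreal ((1::real)\<^sup>2) \<partial>lborel) \<le> ennreal (1\<^sup>2 * \<rho> x)"
      using emeasure_Icc_rho[where x=x and c=1] by simp
  qed auto
  then show ?thesis by simp
qed

lemma abs_set_integral_le: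
  fixes g :: "real \<Rightarrow> real"
  shows "ennreal \<bar>set_lebesgue_integral lborel A g\<bar> \<le> (\<integral>\<^sup>+t\<in>A. ennreal \<bar>g t\<bar> \<partial>lborel)"
proof -
  have "ennreal \<bar>set_lebesgue_integral lborel A g\<bar> \<le> (\<integral>\<^sup>+t. ennreal \<bar>indicator A t *\<^sub>R g t\<bar> \<partial>lborel)"
    unfolding set_lebesgue_integral_def by (rule abs_integral_le_nn)
  also have "\<dots> = (\<integral>\<^sup>+t\<in>A. ennreal \<bar>g t\<bar> \<partial>lborel)"
    by (intro nn_integral_cong) (auto split: split_indicator)
  finally show ?thesis .
qed

lemma slice_norm:
  fixes f :: "'a \<Rightarrow> real"
  assumes f[measurable]: "f \<in> borel_measurable lborel"
  shows "J (slice_op K \<rho> f) \<le> J f"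
proof -
  define bu where "bu x = (\<integral>\<^sup>+t\<in>{0..\<rho> x}. ennreal \<bar>\<integral>y. f y \<partial>U t\<bar> \<partial>lborel)" for x
  have "J (slice_op K \<rho> f) \<le> (\<integral>\<^sup>+x\<in>K. (bu x)\<^sup>2 / ennreal (\<rho> x) \<partial>lborel)"
    unfolding J_def
  proof (intro nn_integral_mono)
    fix x
    show "ennreal (\<rho> x * (slice_op K \<rho> f x)\<^sup>2) * indicator K x \<le> (bu x)\<^sup>2 / ennreal (\<rho> x) * indicator K x"
    proof (cases "x \<in> K \<and> 0 < \<rho> x")
      case True
      have "ennreal (\<rho> x * (slice_op K \<rho> f x)\<^sup>2) = ennreal (\<rho> x * (set_lebesgue_integral lborel {0..\<rho> x} (\<lambda>t. \<integral>y. f y \<partial>U t) / \<rho> x)\<^sup>2)"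
        by (simp add: slice_op_def)
      also have "\<dots> \<le> (bu x)\<^sup>2 / ennreal (\<rho> x)"
        using True unfolding bu_def by (intro ennreal_sq_div abs_set_integral_le) auto
      finally show ?thesis using True by simp
    next
      case False
      then have "x \<notin> K \<or> \<rho> x = 0" using rho_nonneg by force
      then show ?thesis by (auto simp: slice_op_def)
    qed
  qed
  also have "\<dots> \<le> J f" unfolding bu_def by (rule slice_part[OF f])
  finally show ?thesis .
qed

end



context slice_setting begin

definition "Inorm k x = (\<integral>\<^sup>+t\<in>{0..\<rho> x}. ennreal ((op_norm_L2 (U t) (Pk k t))\<^sup>2) \<partial>lborel)"

lemma n_bounds: "0 \<le> op_norm_L2 (U t) (Pk k t)" "op_norm_L2 (U t) (Pk k t) \<le> 2"
  using op_norm_bounds[OF two_in_onset_Pk] by auto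

lemma K_nonempty: "K \<noteq> {}"
  using int_pos by auto

lemma Inorm_le: assumes x: "x \<in> K" shows "Inorm k x \<le> ennreal (4 * \<rho> x)"
proof -
  have "Inorm k x \<le> (\<integral>\<^sup>+t\<in>{0..\<rho> x}. ennreal 4 \<partial>lborel)"
    unfolding Inorm_def
  proof (intro nn_integral_mono mult_right_mono ennreal_leI)
    fix t
    have "(op_norm_L2 (U t) (Pk k t))\<^sup>2 \<le> 2\<^sup>2" using n_bounds[of t k] by (intro power_mono) auto
    then show "(op_norm_L2 (U t) (Pk k t))\<^sup>2 \<le> 4" by simp
  qed simp
  also have "\<dots> = ennreal (4 * \<rho> x)" using rho_nonneg x by (intro emeasure_Icc_rho) auto
  finally show ?thesis .
qed

lemma beta_eq: "beta K \<rho> H k = Sup ((\<lambda>x. sqrt (enn2real (Inorm k x) / \<rho> x)) ` K)"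
  unfolding beta_def Inorm_def Pk_def ..

lemma beta_elem_le: assumes x: "x \<in> K" shows "sqrt (enn2real (Inorm k x) / \<rho> x) \<le> 2"
proof -
  have r0: "0 \<le> \<rho> x" using rho_nonneg x by auto
  have "enn2real (Inorm k x) \<le> 4 * \<rho> x"
    using Inorm_le[OF x, of k] r0 by (simp add: enn2real_leI)
  then have "enn2real (Inorm k x) / \<rho> x \<le> 4"
    using r0 by (cases "\<rho> x = 0") (auto simp: divide_le_eq)
  then have "sqrt (enn2real (Inorm k x) / \<rho> x) \<le> sqrt 4" by (rule real_sqrt_le_mono)
  then show ?thesis by simp
qed

lemma beta_bdd: "bdd_above ((\<lambda>x. sqrt (enn2real (Inorm k x) / \<rho> x)) ` K)"
  using beta_elem_le by (intro bdd_aboveI[of _ 2]) auto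

lemma beta_upper: "x \<in> K \<Longrightarrow> sqrt (enn2real (Inorm k x) / \<rho> x) \<le> beta K \<rho> H k"
  unfolding beta_eq by (rule cSup_upper) (auto intro: beta_bdd)

lemma beta_nonneg: "0 \<le> beta K \<rho> H k"
proof -
  obtain x where "x \<in> K" using K_nonempty by auto
  then show ?thesis using beta_upper[of x k] by (meson order_trans real_sqrt_ge_zero
        divide_nonneg_nonneg enn2real_nonneg rho_nonneg)
qed

lemma Inorm_beta: assumes x: "x \<in> K" and r: "0 < \<rho> x"
  shows "Inorm k x \<le> ennreal ((beta K \<rho> H k)\<^sup>2 * \<rho> x)"
proof -
  let ?r = "enn2real (Inorm k x)"
  have fin: "Inorm k x < \<infinity>" using Inorm_le[OF x, of k] by (simp add: top.not_eq_extremum le_less_trans)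
  have "sqrt (?r / \<rho> x) \<le> beta K \<rho> H k" by (rule beta_upper[OF x])
  then have "(sqrt (?r / \<rho> x))\<^sup>2 \<le> (beta K \<rho> H k)\<^sup>2" by (intro power_mono) (use r in auto)
  then have "?r / \<rho> x \<le> (beta K \<rho> H k)\<^sup>2" using r by simp
  then have "?r \<le> (beta K \<rho> H k)\<^sup>2 * \<rho> x" using r by (simp add: divide_le_eq)
  then have "ennreal ?r \<le> ennreal ((beta K \<rho> H k)\<^sup>2 * \<rho> x)" by (rule ennreal_leI)
  then show ?thesis using fin by (simp add: ennreal_enn2real_if split: if_splits)
qed

end



context slice_setting begin

lemma G_meas:
  fixes f :: "'a \<Rightarrow> real"
  assumes f[measurable]: "f \<in> borel_measurable lborel"
  shows "(\<lambda>(t, x). Pk k t f x) \<in> borel_measurable (lborel \<Otimes>\<^sub>M lborel)"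
proof -
  have a: "(\<lambda>p. kernel_pow H (fst p) k f (snd p)) \<in> borel_measurable (lborel \<Otimes>\<^sub>M lborel)"
    by (rule kpow_meas[OF f])
  have b: "(\<lambda>p. \<integral>y. f y \<partial>U (fst p)) \<in> borel_measurable (lborel \<Otimes>\<^sub>M (lborel::'a measure))"
    by (rule measurable_compose[OF measurable_fst u_meas[OF f]])
  show ?thesis
    apply (subst measurable_split_conv)
    unfolding Pk_def using borel_measurable_diff[OF a b] by simp
qed

lemma Qn_U_meas:
  fixes g :: "real \<Rightarrow> 'a \<Rightarrow> real"
  assumes g: "(\<lambda>(t, x). g t x) \<in> borel_measurable (lborel \<Otimes>\<^sub>M lborel)"
  shows "(\<lambda>t. Qn (U t) (g t)) \<in> borel_measurable lborel"
proof (rule nn_integral_measurable_subprob_algebra2[OF _ U_kernel])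
  show "(\<lambda>(t, x). ennreal ((g t x)\<^sup>2)) \<in> borel_measurable (lborel \<Otimes>\<^sub>M lborel)"
    using g by measurable
qed

lemma m_props:
  fixes f :: "'a \<Rightarrow> real" and k :: nat and e :: real
  assumes f[measurable]: "f \<in> borel_measurable lborel"
  defines "m t \<equiv> enn2real (Qn (U t) (Pk k t f)) / enn2real (Qn (U t) f)"
  shows "m t \<le> (op_norm_L2 (U t) (Pk k t))\<^sup>2" "0 \<le> m t"
    "0 < e \<Longrightarrow> Qn (U t) (Pk k t f) \<le> ennreal (m t + e) * Qn (U t) f"
proof -
  let ?n = "op_norm_L2 (U t) (Pk k t)"
  let ?M = "Qn (U t) (Pk k t f)" and ?F = "Qn (U t) f"
  define Fr where "Fr = enn2real ?F"
  define Mr where "Mr = enn2real ?M"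
  have Fr0: "0 \<le> Fr" unfolding Fr_def by simp
  show m0: "0 \<le> m t" unfolding m_def by simp
  have fin_case: "ennreal Fr = ?F \<and> ennreal Mr = ?M \<and> Mr \<le> ?n\<^sup>2 * Fr" if Ffin: "?F < \<infinity>"
  proof -
    have FF: "ennreal Fr = ?F" unfolding Fr_def using Ffin by (simp add: ennreal_enn2real_if)
    have "L2fun (U t) f" unfolding L2fun_def using Ffin by (simp add: meas_U)
    from op_norm_bound_apply[OF two_in_onset_Pk this]
    have "?M \<le> ennreal (?n\<^sup>2) * ennreal Fr" unfolding FF .
    also have "\<dots> = ennreal (?n\<^sup>2 * Fr)" using Fr0 by (rule ennreal_mult[symmetric, OF zero_le_power2])
    finally have Mle: "?M \<le> ennreal (?n\<^sup>2 * Fr)" .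
    then have "?M < \<infinity>" using ennreal_less_top[of "?n\<^sup>2 * Fr"] unfolding infinity_ennreal_def by (rule le_less_trans)
    then have MM: "ennreal Mr = ?M" unfolding Mr_def by (simp add: ennreal_enn2real_if)
    have "Mr \<le> ?n\<^sup>2 * Fr" using Mle unfolding MM[symmetric] using Fr0 by (simp add: ennreal_le_iff)
    with FF MM show ?thesis by simp
  qed
  show "m t \<le> ?n\<^sup>2"
  proof (cases "?F < \<infinity>")
    case True
    note fc = fin_case[OF True]
    show ?thesis
    proof (cases "Fr = 0")
      case True then show ?thesis unfolding m_def Fr_def[symmetric] by simp
    next
      case False
      then have Fp: "0 < Fr" using Fr0 by linarith
      show ?thesis unfolding m_def Fr_def[symmetric] Mr_def[symmetric]
        using pos_divide_le_eq[OF Fp] fc by simp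
    qed
  next
    case False
    then have "?F = \<infinity>" using top.not_eq_extremum unfolding infinity_ennreal_def by blast
    then show ?thesis unfolding m_def by simp
  qed
  assume e: "0 < e"
  show "?M \<le> ennreal (m t + e) * ?F"
  proof (cases "?F < \<infinity>")
    case False
    then have "?F = \<infinity>" using top.not_eq_extremum unfolding infinity_ennreal_def by blast
    moreover have "0 < m t + e" using m0 e by simp
    ultimately show ?thesis by (simp add: ennreal_mult_top)
  next
    case True
    note fc = fin_case[OF True]
    show ?thesis
    proof (cases "Fr = 0")
      case True
      then have "Mr \<le> 0" using fc by simp
      then have "ennreal Mr = 0" by (simp add: ennreal_eq_0_iff)
      then have "?M = 0" using fc by simp
      then show ?thesis by simp
    next
      case False
      then have Fp: "0 < Fr" using Fr0 by linarith
      have "Mr = m t * Fr" unfolding m_def Fr_def[symmetric] Mr_def[symmetric] using Fp by simp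
      also have "\<dots> \<le> (m t + e) * Fr" using e Fp by (intro mult_right_mono) auto
      finally have "ennreal Mr \<le> ennreal ((m t + e) * Fr)" by (rule ennreal_leI)
      also have "\<dots> = ennreal (m t + e) * ennreal Fr"
        using m0 e Fr0 by (intro ennreal_mult) auto
      finally show ?thesis using fc by simp
    qed
  qed
qed


lemma swap_meas:
  fixes g :: "real \<Rightarrow> 'a \<Rightarrow> 'c::{second_countable_topology, topological_space}"
  assumes "(\<lambda>(t, x). g t x) \<in> borel_measurable (lborel \<Otimes>\<^sub>M lborel)"
  shows "(\<lambda>(x, t). g t x) \<in> borel_measurable (lborel \<Otimes>\<^sub>M lborel)"
proof -
  have s: "(\<lambda>p. (snd p, fst p)) \<in> ((lborel::'a measure) \<Otimes>\<^sub>M (lborel::real measure)) \<rightarrow>\<^sub>M ((lborel::real measure) \<Otimes>\<^sub>M (lborel :: 'a measure))"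
    by measurable
  show ?thesis using measurable_compose[OF s assms] by (simp add: split_beta')
qed

lemma fix2_meas:
  fixes g :: "real \<Rightarrow> 'a \<Rightarrow> real"
  assumes "(\<lambda>(t, x). g t x) \<in> borel_measurable (lborel \<Otimes>\<^sub>M lborel)"
  shows "(\<lambda>t. g t x) \<in> borel_measurable lborel"
  using measurable_compose[OF measurable_Pair2'[of x lborel lborel] assms] by simp

lemma top_sq_div: "0 < r \<Longrightarrow> (top::ennreal)\<^sup>2 / ennreal r = top"
  by (simp add: ennreal_top_divide power2_eq_square)

lemma hyb_part:
  fixes f :: "'a \<Rightarrow> real" and c :: real
  assumes f[measurable]: "f \<in> borel_measurable lborel" and Jf: "J f < \<infinity>" and c: "beta K \<rho> H k < c"
  shows "J (\<lambda>x. hybrid_op \<rho> H k f x - slice_op K \<rho> f x) \<le> ennreal (c\<^sup>2) * J f"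
proof -
  define \<beta> where "\<beta> = beta K \<rho> H k"
  have b0: "0 \<le> \<beta>" using beta_nonneg unfolding \<beta>_def .
  have bc: "\<beta> < c" using c unfolding \<beta>_def .
  define e where "e = c\<^sup>2 - \<beta>\<^sup>2"
  have "\<beta>\<^sup>2 < c\<^sup>2" using b0 bc by (intro power_strict_mono) auto
  then have e0: "0 < e" unfolding e_def by simp
  define m where "m t = enn2real (Qn (U t) (Pk k t f)) / enn2real (Qn (U t) f)" for t
  define w where "w t = sqrt (m t + e)" for t
  have m0: "0 \<le> m t" and mn: "m t \<le> (op_norm_L2 (U t) (Pk k t))\<^sup>2"
    and mi: "Qn (U t) (Pk k t f) \<le> ennreal (m t + e) * Qn (U t) f" for t
    using m_props(1)[OF f, where t=t and k=k] m_props(2)[OF f, where t=t and k=k] m_props(3)[OF f e0, where t=t and k=k] unfolding m_def by auto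
  have w2: "(w t)\<^sup>2 = m t + e" for t using m0[of t] e0 by (simp add: w_def)
  have wpos: "0 < w t" for t using m0[of t] e0 by (simp add: w_def)
  have Gm: "(\<lambda>(t,x). Pk k t f x) \<in> borel_measurable (lborel \<Otimes>\<^sub>M lborel)" by (rule G_meas[OF f])
  have fm2: "(\<lambda>(t::real,x::'a). f x) \<in> borel_measurable ((lborel :: real measure) \<Otimes>\<^sub>M (lborel :: 'a measure))" by measurable
  have Mm: "(\<lambda>t. Qn (U t) (Pk k t f)) \<in> borel_measurable lborel"
    using Qn_U_meas[OF Gm] by simp
  have Fm: "(\<lambda>t. Qn (U t) f) \<in> borel_measurable lborel"
    using Qn_U_meas[OF fm2] by simp
  have mm[measurable]: "m \<in> borel_measurable lborel"
    unfolding m_def[abs_def] using Mm Fm by measurable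
  have wm[measurable]: "w \<in> borel_measurable lborel"
    unfolding w_def[abs_def] by measurable
  define a where "a x = (\<integral>\<^sup>+t\<in>{0..\<rho> x}. ennreal \<bar>Pk k t f x\<bar> \<partial>lborel)" for x
  define bu where "bu x = (\<integral>\<^sup>+t\<in>{0..\<rho> x}. ennreal \<bar>\<integral>y. f y \<partial>U t\<bar> \<partial>lborel)" for x
  have WB: "(\<integral>\<^sup>+x\<in>K. (a x)\<^sup>2 / ennreal (\<rho> x) \<partial>lborel) \<le> ennreal (c\<^sup>2) * J f"
    unfolding J_def a_def
  proof (rule weighted_bound[where G="\<lambda>t x. Pk k t f x" and w=w])
    show "(\<lambda>(t, x). Pk k t f x) \<in> borel_measurable (lborel \<Otimes>\<^sub>M lborel)" by (rule Gm)
    show "w \<in> borel_measurable lborel" by (rule wm)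
    show "0 < w t" for t by (rule wpos)
    show "f \<in> borel_measurable lborel" by (rule f)
    fix t :: real
    show "Qn (U t) (\<lambda>x. Pk k t f x) \<le> ennreal ((w t)\<^sup>2) * Qn (U t) f"
      using mi[of t] unfolding w2 by simp
  next
    fix x assume x: "x \<in> K" and r: "0 < \<rho> x"
    have "(\<integral>\<^sup>+t\<in>{0..\<rho> x}. ennreal ((w t)\<^sup>2) \<partial>lborel)
        = (\<integral>\<^sup>+t. ennreal (m t) * indicator {0..\<rho> x} t + ennreal e * indicator {0..\<rho> x} t \<partial>lborel)"
      by (intro nn_integral_cong) (simp add: w2 m0 e0 ennreal_plus less_imp_le distrib_right)
    also have "\<dots> = (\<integral>\<^sup>+t\<in>{0..\<rho> x}. ennreal (m t) \<partial>lborel) + (\<integral>\<^sup>+t\<in>{0..\<rho> x}. ennreal e \<partial>lborel)"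
      by (rule nn_integral_add) measurable
    also have "\<dots> \<le> Inorm k x + ennreal (e * \<rho> x)"
    proof (rule add_mono)
      show "(\<integral>\<^sup>+t\<in>{0..\<rho> x}. ennreal (m t) \<partial>lborel) \<le> Inorm k x"
        unfolding Inorm_def by (intro nn_integral_mono mult_right_mono ennreal_leI mn) simp
      show "(\<integral>\<^sup>+t\<in>{0..\<rho> x}. ennreal e \<partial>lborel) \<le> ennreal (e * \<rho> x)"
        using emeasure_Icc_rho[where x=x and c=e] e0 r by simp
    qed
    also have "\<dots> \<le> ennreal (\<beta>\<^sup>2 * \<rho> x) + ennreal (e * \<rho> x)"
      using Inorm_beta[OF x r, of k] unfolding \<beta>_def by (rule add_right_mono)
    also have "\<dots> = ennreal (c\<^sup>2 * \<rho> x)"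
      using e0 r by (simp add: ennreal_plus[symmetric] e_def algebra_simps)
    finally show "(\<integral>\<^sup>+t\<in>{0..\<rho> x}. ennreal ((w t)\<^sup>2) \<partial>lborel) \<le> ennreal (c\<^sup>2 * \<rho> x)" .
  qed
  have SP: "(\<integral>\<^sup>+x\<in>K. (bu x)\<^sup>2 / ennreal (\<rho> x) \<partial>lborel) \<le> J f"
    unfolding bu_def by (rule slice_part[OF f])
  have um: "(\<lambda>(t, x::'a). \<integral>y. f y \<partial>U t) \<in> borel_measurable (lborel \<Otimes>\<^sub>M lborel)"
    apply (subst measurable_split_conv)
    apply (rule measurable_compose[OF measurable_fst])
    apply (rule u_meas[OF f])
    done
  have am: "a \<in> borel_measurable lborel"
  proof -
    note [measurable] = swap_meas[OF Gm]
    have "(\<lambda>(x, t). ennreal \<bar>Pk k t f x\<bar> * indicator {0..\<rho> x} t) \<in> borel_measurable (lborel \<Otimes>\<^sub>M lborel)"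
      by (simp add: split_beta') measurable
    from lborel.borel_measurable_nn_integral[OF this] show ?thesis unfolding a_def[abs_def] by simp
  qed
  have bm: "bu \<in> borel_measurable lborel"
  proof -
    note [measurable] = swap_meas[OF um]
    have "(\<lambda>(x, t). ennreal \<bar>\<integral>y. f y \<partial>U t\<bar> * indicator {0..\<rho> x} t) \<in> borel_measurable (lborel \<Otimes>\<^sub>M lborel)"
      by (simp add: split_beta') measurable
    from lborel.borel_measurable_nn_integral[OF this] show ?thesis unfolding bu_def[abs_def] by simp
  qed
  have cJ: "ennreal (c\<^sup>2) * J f < \<infinity>" using Jf by (simp add: ennreal_mult_less_top)
  have AEa: "AE x in lborel. (a x)\<^sup>2 / ennreal (\<rho> x) * indicator K x \<noteq> \<infinity>"
    by (rule nn_integral_PInf_AE) (use am WB cJ in \<open>auto\<close>)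
  have AEb: "AE x in lborel. (bu x)\<^sup>2 / ennreal (\<rho> x) * indicator K x \<noteq> \<infinity>"
    by (rule nn_integral_PInf_AE) (use bm SP Jf in \<open>auto\<close>)
  have "J (\<lambda>x. hybrid_op \<rho> H k f x - slice_op K \<rho> f x) \<le> (\<integral>\<^sup>+x\<in>K. (a x)\<^sup>2 / ennreal (\<rho> x) \<partial>lborel)"
    unfolding J_def
  proof (rule nn_integral_mono_AE)
    show "AE x in lborel. ennreal (\<rho> x * (hybrid_op \<rho> H k f x - slice_op K \<rho> f x)\<^sup>2) * indicator K x
        \<le> (a x)\<^sup>2 / ennreal (\<rho> x) * indicator K x"
      using AEa AEb
    proof eventually_elim
      case (elim x)
      show ?case
      proof (cases "x \<in> K \<and> 0 < \<rho> x")
        case False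
        then have "x \<notin> K \<or> \<rho> x = 0" using rho_nonneg by force
        then show ?thesis by auto
      next
        case True
        then have xK: "x \<in> K" and r: "0 < \<rho> x" by auto
        have afin: "a x \<noteq> \<infinity>" using elim(1) xK r top_sq_div[OF r] by auto
        have bfin: "bu x \<noteq> \<infinity>" using elim(2) xK r top_sq_div[OF r] by auto
        define I where "I = {0..\<rho> x}"
        have Isets: "I \<in> sets lborel" unfolding I_def by simp
        have siu: "set_integrable lborel I (\<lambda>t. \<integral>y. f y \<partial>U t)"
          unfolding set_integrable_def
        proof (rule integrableI_bounded)
          show "(\<lambda>t. indicator I t *\<^sub>R (\<integral>y. f y \<partial>U t)) \<in> borel_measurable lborel"
            by (intro borel_measurable_scaleR borel_measurable_indicator Isets u_meas[OF f])
          have "(\<integral>\<^sup>+t. ennreal (norm (indicator I t *\<^sub>R (\<integral>y. f y \<partial>U t))) \<partial>lborel) = bu x"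
            unfolding bu_def I_def by (intro nn_integral_cong) (auto split: split_indicator)
          then show "(\<integral>\<^sup>+t. ennreal (norm (indicator I t *\<^sub>R (\<integral>y. f y \<partial>U t))) \<partial>lborel) < \<infinity>"
            using bfin by (simp add: top.not_eq_extremum)
        qed
        have siG: "set_integrable lborel I (\<lambda>t. Pk k t f x)"
          unfolding set_integrable_def
        proof (rule integrableI_bounded)
          show "(\<lambda>t. indicator I t *\<^sub>R Pk k t f x) \<in> borel_measurable lborel"
            by (intro borel_measurable_scaleR borel_measurable_indicator Isets fix2_meas[OF Gm])
          have "(\<integral>\<^sup>+t. ennreal (norm (indicator I t *\<^sub>R Pk k t f x)) \<partial>lborel) = a x"
            unfolding a_def I_def by (intro nn_integral_cong) (auto split: split_indicator)
          then show "(\<integral>\<^sup>+t. ennreal (norm (indicator I t *\<^sub>R Pk k t f x)) \<partial>lborel) < \<infinity>"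
            using afin by (simp add: top.not_eq_extremum)
        qed
        have keq: "(\<lambda>t. kernel_pow H t k f x) = (\<lambda>t. Pk k t f x + (\<integral>y. f y \<partial>U t))"
          by (simp add: Pk_def)
        have SIk: "set_lebesgue_integral lborel I (\<lambda>t. kernel_pow H t k f x)
            = set_lebesgue_integral lborel I (\<lambda>t. Pk k t f x) + set_lebesgue_integral lborel I (\<lambda>t. \<integral>y. f y \<partial>U t)"
          unfolding keq by (rule set_integral_add(2)[OF siG siu])
        have diff: "hybrid_op \<rho> H k f x - slice_op K \<rho> f x = set_lebesgue_integral lborel I (\<lambda>t. Pk k t f x) / \<rho> x"
          unfolding hybrid_op_def slice_op_def I_def[symmetric] SIk by (simp add: diff_divide_distrib add_divide_distrib)
        have "ennreal (\<rho> x * (hybrid_op \<rho> H k f x - slice_op K \<rho> f x)\<^sup>2) \<le> (a x)\<^sup>2 / ennreal (\<rho> x)"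
          unfolding diff a_def I_def by (intro ennreal_sq_div r abs_set_integral_le)
        then show ?thesis using xK by simp
      qed
    qed
  qed
  also have "\<dots> \<le> ennreal (c\<^sup>2) * J f" by (rule WB)
  finally show ?thesis .
qed

end



lemma sq_split_ineq:
  fixes a b s :: real
  assumes s: "0 < s"
  shows "(a + b)\<^sup>2 \<le> (1 + s) * a\<^sup>2 + (1 + 1 / s) * b\<^sup>2"
proof -
  have "(1 + s) * a\<^sup>2 + (1 + 1 / s) * b\<^sup>2 - (a + b)\<^sup>2 = (s * a - b)\<^sup>2 / s"
    using s by (simp add: field_simps power2_eq_square)
  also have "\<dots> \<ge> 0" using s by simp
  finally show ?thesis by simp
qed

context slice_setting begin

abbreviation "\<pi> \<equiv> target K \<rho>"

lemma L2_target_meas: "L2fun \<pi> f \<Longrightarrow> f \<in> borel_measurable lborel"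
  unfolding L2fun_def by (subst (asm) measurable_cong_sets[OF sets_target refl]) simp

lemma Jf_fin: assumes "L2fun \<pi> f" shows "J f < \<infinity>"
proof -
  have fm: "f \<in> borel_measurable lborel" by (rule L2_target_meas[OF assms])
  have "Qn \<pi> f < \<infinity>" using assms by (simp add: L2fun_def)
  then have "J f / ennreal Z < \<infinity>" using Qn_target[OF fm] by simp
  then have "J f / ennreal Z * ennreal Z < \<infinity>" by (simp add: ennreal_mult_less_top)
  also have "J f / ennreal Z * ennreal Z = J f * ennreal Z / ennreal Z"
    unfolding ennreal_divide_times ennreal_times_divide ..
  also have "\<dots> = J f" using Z_facts(2) by (intro mult_divide_eq_ennreal) auto
  finally show ?thesis .
qed

lemma subprob_target: "subprob_space \<pi>"
  using prob_target by (rule prob_space_imp_subprob_space)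

definition "PUS = (\<lambda>f x. slice_op K \<rho> f x - (\<integral>y. f y \<partial>\<pi>))"
definition "PHU k = (\<lambda>f x. hybrid_op \<rho> H k f x - slice_op K \<rho> f x)"
definition "PHS k = (\<lambda>f x. hybrid_op \<rho> H k f x - (\<integral>y. f y \<partial>\<pi>))"

lemma two_onset_PUS: "2 \<in> onset \<pi> PUS"
proof (rule onsetI)
  fix f assume f: "L2fun \<pi> f"
  have fm[measurable]: "f \<in> borel_measurable lborel" by (rule L2_target_meas[OF f])
  have sm: "slice_op K \<rho> f \<in> borel_measurable lborel" by (rule slice_meas[OF fm])
  have "Qn \<pi> (PUS f) \<le> 2 * Qn \<pi> (slice_op K \<rho> f) + 2 * Qn \<pi> (\<lambda>x. \<integral>y. f y \<partial>\<pi>)"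
    unfolding PUS_def by (rule Qn_diff_le) (use sm in \<open>simp_all add: measurable_cong_sets[OF sets_target refl]\<close>)
  also have "\<dots> \<le> 2 * Qn \<pi> f + 2 * Qn \<pi> f"
  proof (intro add_mono mult_left_mono)
    have "Qn \<pi> (slice_op K \<rho> f) = J (slice_op K \<rho> f) / ennreal Z" by (rule Qn_target[OF sm])
    also have "\<dots> \<le> J f / ennreal Z" by (intro divide_right_mono_ennreal slice_norm[OF fm])
    also have "\<dots> = Qn \<pi> f" by (rule Qn_target[OF fm, symmetric])
    finally show "Qn \<pi> (slice_op K \<rho> f) \<le> Qn \<pi> f" .
    have "Qn \<pi> (\<lambda>x. \<integral>y. f y \<partial>\<pi>) \<le> ennreal ((\<integral>y. f y \<partial>\<pi>)\<^sup>2)"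
      by (rule Qn_const_le[OF subprob_target])
    also have "\<dots> \<le> Qn \<pi> f"
      by (rule sq_integral_le_subprob[OF subprob_target]) (simp add: measurable_cong_sets[OF sets_target refl])
    finally show "Qn \<pi> (\<lambda>x. \<integral>y. f y \<partial>\<pi>) \<le> Qn \<pi> f" .
  qed auto
  also have "\<dots> = ennreal (2\<^sup>2) * Qn \<pi> f"
    unfolding distrib_right[symmetric] by simp
  finally show "Qn \<pi> (PUS f) \<le> ennreal (2\<^sup>2) * Qn \<pi> f" .
qed simp

lemma onset_PHU: assumes c: "beta K \<rho> H k < c" shows "c \<in> onset \<pi> (PHU k)"
proof (rule onsetI)
  show "0 \<le> c" using beta_nonneg[of k] c by simp
  fix f assume f: "L2fun \<pi> f"
  have fm[measurable]: "f \<in> borel_measurable lborel" by (rule L2_target_meas[OF f])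
  have dm: "PHU k f \<in> borel_measurable lborel"
    unfolding PHU_def using hyb_meas[OF fm] slice_meas[OF fm] by measurable
  have "Qn \<pi> (PHU k f) = J (PHU k f) / ennreal Z" by (rule Qn_target[OF dm])
  also have "\<dots> \<le> ennreal (c\<^sup>2) * J f / ennreal Z"
    unfolding PHU_def by (intro divide_right_mono_ennreal hyb_part[OF fm Jf_fin[OF f] c])
  also have "\<dots> = ennreal (c\<^sup>2) * Qn \<pi> f"
    by (simp add: Qn_target[OF fm] ennreal_times_divide)
  finally show "Qn \<pi> (PHU k f) \<le> ennreal (c\<^sup>2) * Qn \<pi> f" .
qed

lemma onset_combine:
  assumes c1: "c1 \<in> onset \<pi> (PHU k)" and c2: "c2 \<in> onset \<pi> PUS" and p1: "0 < c1" and p2: "0 < c2"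
  shows "c1 + c2 \<in> onset \<pi> (PHS k)"
proof (rule onsetI)
  show "0 \<le> c1 + c2" using p1 p2 by simp
  fix f assume f: "L2fun \<pi> f"
  have fm[measurable]: "f \<in> borel_measurable lborel" by (rule L2_target_meas[OF f])
  have hm[measurable]: "hybrid_op \<rho> H k f \<in> borel_measurable lborel" by (rule hyb_meas[OF fm])
  have sm[measurable]: "slice_op K \<rho> f \<in> borel_measurable lborel" by (rule slice_meas[OF fm])
  define s where "s = c2 / c1"
  have s0: "0 < s" unfolding s_def using p1 p2 by simp
  have "Qn \<pi> (PHS k f) \<le> (\<integral>\<^sup>+x. ennreal (1 + s) * ennreal ((PHU k f x)\<^sup>2) + ennreal (1 + 1 / s) * ennreal ((PUS f x)\<^sup>2) \<partial>\<pi>)"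
  proof (rule nn_integral_mono)
    fix x
    have "PHS k f x = PHU k f x + PUS f x" by (simp add: PHS_def PHU_def PUS_def)
    then have "(PHS k f x)\<^sup>2 \<le> (1 + s) * (PHU k f x)\<^sup>2 + (1 + 1 / s) * (PUS f x)\<^sup>2"
      using sq_split_ineq[OF s0] by simp
    then have "ennreal ((PHS k f x)\<^sup>2) \<le> ennreal ((1 + s) * (PHU k f x)\<^sup>2 + (1 + 1 / s) * (PUS f x)\<^sup>2)"
      by (rule ennreal_leI)
    also have "\<dots> = ennreal (1 + s) * ennreal ((PHU k f x)\<^sup>2) + ennreal (1 + 1 / s) * ennreal ((PUS f x)\<^sup>2)"
      using s0 by (simp add: ennreal_plus ennreal_mult)
    finally show "ennreal ((PHS k f x)\<^sup>2) \<le> ennreal (1 + s) * ennreal ((PHU k f x)\<^sup>2) + ennreal (1 + 1 / s) * ennreal ((PUS f x)\<^sup>2)" .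
  qed
  also have "\<dots> = ennreal (1 + s) * Qn \<pi> (PHU k f) + ennreal (1 + 1 / s) * Qn \<pi> (PUS f)"
    unfolding PHU_def PUS_def
    by (subst nn_integral_add) (auto simp: nn_integral_cmult measurable_cong_sets[OF sets_target refl])
  also have "\<dots> \<le> ennreal (1 + s) * (ennreal (c1\<^sup>2) * Qn \<pi> f) + ennreal (1 + 1 / s) * (ennreal (c2\<^sup>2) * Qn \<pi> f)"
    using c1 c2 f unfolding onset_def by (intro add_mono mult_left_mono) auto
  also have "\<dots> = ennreal ((1 + s) * c1\<^sup>2 + (1 + 1 / s) * c2\<^sup>2) * Qn \<pi> f"
  proof -
    have e1: "ennreal ((1+s)*c1\<^sup>2) = ennreal (1+s) * ennreal (c1\<^sup>2)" using s0 by (intro ennreal_mult) auto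
    have e2: "ennreal ((1+1/s)*c2\<^sup>2) = ennreal (1+1/s) * ennreal (c2\<^sup>2)" using s0 by (intro ennreal_mult) auto
    have e3: "ennreal ((1+s)*c1\<^sup>2 + (1+1/s)*c2\<^sup>2) = ennreal ((1+s)*c1\<^sup>2) + ennreal ((1+1/s)*c2\<^sup>2)"
      using s0 by (intro ennreal_plus) auto
    show ?thesis unfolding e3 e1 e2 by (simp only: distrib_right mult.assoc)
  qed
  also have "(1 + s) * c1\<^sup>2 + (1 + 1 / s) * c2\<^sup>2 = (c1 + c2)\<^sup>2"
    unfolding s_def using p1 p2 by (simp add: field_simps power2_eq_square)
  finally show "Qn \<pi> (PHS k f) \<le> ennreal ((c1 + c2)\<^sup>2) * Qn \<pi> f" .
qed

lemma main_ineq: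
  "op_norm_L2 \<pi> (PHS k) \<le> beta K \<rho> H k + op_norm_L2 \<pi> PUS"
proof (rule op_norm_le)
  have b0: "0 \<le> beta K \<rho> H k" by (rule beta_nonneg)
  have n0: "0 \<le> op_norm_L2 \<pi> PUS" by (rule op_norm_bounds(1)[OF two_onset_PUS])
  show "0 \<le> beta K \<rho> H k + op_norm_L2 \<pi> PUS" using b0 n0 by simp
  fix c assume c: "beta K \<rho> H k + op_norm_L2 \<pi> PUS < c"
  define d where "d = (c - (beta K \<rho> H k + op_norm_L2 \<pi> PUS)) / 2"
  have d0: "0 < d" using c by (simp add: d_def)
  have 1: "beta K \<rho> H k + d \<in> onset \<pi> (PHU k)" using d0 by (intro onset_PHU) simp
  have 2: "op_norm_L2 \<pi> PUS + d \<in> onset \<pi> PUS" using d0 by (intro onset_above[OF two_onset_PUS]) simp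
  have "(beta K \<rho> H k + d) + (op_norm_L2 \<pi> PUS + d) \<in> onset \<pi> (PHS k)"
    using b0 n0 d0 by (intro onset_combine[OF 1 2]) auto
  moreover have "(beta K \<rho> H k + d) + (op_norm_L2 \<pi> PUS + d) = c" by (simp add: d_def)
  ultimately show "c \<in> onset \<pi> (PHS k)" by simp
qed

lemma gap_result: "gap \<pi> (hybrid_op \<rho> H k) \<ge> gap \<pi> (slice_op K \<rho>) - beta K \<rho> H k"
  using main_ineq[of k] unfolding gap_def PHS_def PUS_def by simp

end


theorem corollary3p2:
  fixes K :: "'a::euclidean_space set" and \<rho> :: "'a \<Rightarrow> real"
    and H :: "real \<Rightarrow> 'a \<Rightarrow> 'a measure" and k :: nat
  assumes K_borel: "K \<in> sets lborel"
    and rho_meas: "\<rho> \<in> borel_measurable lborel"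
    and rho_nonneg: "\<forall>x\<in>K. 0 \<le> \<rho> x"
    and int_pos: "0 < (\<integral>\<^sup>+x\<in>K. ennreal (\<rho> x) \<partial>lborel)"
    and int_fin: "(\<integral>\<^sup>+x\<in>K. ennreal (\<rho> x) \<partial>lborel) < \<infinity>"
    and level_vol: "\<forall>t. 0 < t \<and> (\<exists>x\<in>K. t < \<rho> x) \<longrightarrow>
        0 < emeasure lborel (level_set K \<rho> t) \<and> emeasure lborel (level_set K \<rho> t) < \<infinity>"
    and H_meas: "(\<lambda>p. H (fst p) (snd p)) \<in> (borel \<Otimes>\<^sub>M lborel) \<rightarrow>\<^sub>M subprob_algebra lborel"
    and H_markov: "\<forall>t x. x \<in> level_set K \<rho> t \<longrightarrow>
        prob_space (H t x) \<and> emeasure (H t x) (level_set K \<rho> t) = 1"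
    and H_zero: "\<forall>t x. x \<notin> level_set K \<rho> t \<longrightarrow> H t x = null_measure lborel"
    and H_rev: "\<forall>t A B. A \<in> sets lborel \<and> B \<in> sets lborel \<longrightarrow>
        (\<integral>\<^sup>+x\<in>A. emeasure (H t x) B \<partial>(unif_level K \<rho> t)) =
        (\<integral>\<^sup>+x\<in>B. emeasure (H t x) A \<partial>(unif_level K \<rho> t))"
    and gapU: "0 < gap (target K \<rho>) (slice_op K \<rho>)"
    and k_pos: "1 \<le> k"
  shows "gap (target K \<rho>) (hybrid_op \<rho> H k) \<ge> gap (target K \<rho>) (slice_op K \<rho>) - beta K \<rho> H k"
proof -
  interpret slice_setting K \<rho> H
    using K_borel rho_meas rho_nonneg int_pos int_fin level_vol H_meas H_markov H_zero H_rev
    by unfold_locales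
  show ?thesis by (rule gap_result)
qed

end
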